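(* Consider the multi-class loss system described in the context, with $C$ classes, arrival rates $\boldsymbol{\lambda}=(\lambda_1,\dots,\lambda_C)$, bandwidth vector $\mathbf{h}=(h_1,\dots,h_C)$, transmission-duration vector $\mathbf{s}=(s_1,\dots,s_C)$ and total bandwidth $W$. Fix a positive integer $q$ and an index $i\in\{1,\dots,C\}$, and define $$\mathbf{h}':=(h_1,\dots,h_{i-1},h_i/q,h_{i+1},\dots,h_C),\qquad \mathbf{s}':=(s_1,\dots,s_{i-1},q s_i,s_{i+1},\dots,s_C).$$ If $\rho_i:=\lambda_i s_i<1$, then for every class $c\in\{1,\dots,C\}$ there exists $\tilde W_c$ such that for all $W>\tilde W_c$, $$P^{B}_c(\mathbf{h},\mathbf{s},\boldsymbol{\lambda},W)\;\ge\;P^{B}_c(\mathbf{h}',\mathbf{s}',\boldsymbol{\lambda},W).$$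
   Context: Multi-class loss system (one-shot transmission model with immediate scheduling): there are $C$ classes of packets. Class-$c$ packets arrive according to independent Poisson processes of rate $\lambda_c>0$. An admitted class-$c$ packet occupies bandwidth $h_c>0$ for a deterministic duration $s_c>0$ and then leaves. The total available bandwidth is $W>0$. Let $N_{c'}(t)$ be the number of class-$c'$ packets in transmission at time $t$. A class-$c$ packet arriving at time $t$ is admitted immediately if $h_c+\sum_{c'=1}^C h_{c'}N_{c'}(t)\le W$; otherwise it is blocked (lost). Admitted packets are never preempted. Write $\rho_c:=\lambda_c s_c$. The stationary distribution of $\mathbf{N}=(N_1,\dots,N_C)$ is the truncated product form $\pi(\mathbf{n})=G\prod_{c=1}^C \rho_c^{n_c}/n_c!$ on $\mathcal{S}=\{\mathbf{n}\in\mathbb{Z}_+^C:\sum_c h_c n_c\le W\}$, with $G$ the normalizing constant. The blocking probability of class $c$, $P^{B}_c(\mathbf{h},\mathbf{s},\boldsymbol{\lambda},W)$, is the probability that a typical class-$c$ arrival is blocked, i.e. (by PASTA) $$P^{B}_c(\mathbf{h},\mathbf{s},\boldsymbol{\lambda},W)=\frac{\sum_{\mathbf{n}\in\mathcal{S}:\,h_c+\sum_{c'}h_{c'}n_{c'}>W}\prod_{c'}\rho_{c'}^{n_{c'}}/n_{c'}!}{\sum_{\mathbf{n}\in\mathcal{S}}\prod_{c'}\rho_{c'}^{n_{c'}}/n_{c'}!}.$$ For the primed parameters $(\mathbf{h}',\mathbf{s}')$, the same definition is used with $h_i$ replaced by $h_i/q$ and $\rho_i$ replaced by $\lambda_i q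 s_i=q\rho_i$. *)

theory Defs
  imports "HOL-Analysis.Analysis"
begin

text \<open>Classes are indexed by 0..C-1. A state is a function n :: nat => nat
  that vanishes outside {..<C}. Vectors h, s, lambda are functions nat => real.\<close>

definition occupied :: "nat \<Rightarrow> (nat \<Rightarrow> real) \<Rightarrow> (nat \<Rightarrow> nat) \<Rightarrow> real" where
  "occupied C h n = (\<Sum>c<C. h c * real (n c))"

definition state_space :: "nat \<Rightarrow> (nat \<Rightarrow> real) \<Rightarrow> real \<Rightarrow> (nat \<Rightarrow> nat) set" where
  "state_space C h W = {n. (\<forall>c. C \<le> c \<longrightarrow> n c = 0) \<and> occupied C h n \<le> W}"

definition weight :: "nat \<Rightarrow> (nat \<Rightarrow> real) \<Rightarrow> (nat \<Rightarrow> nat) \<Rightarrow> real" where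
  "weight C \<rho> n = (\<Prod>c<C. \<rho> c ^ n c / fact (n c))"

text \<open>Blocking probability of class c (via PASTA), with loads rho_c = lambda_c * s_c.\<close>
definition blocking_prob ::
  "nat \<Rightarrow> nat \<Rightarrow> (nat \<Rightarrow> real) \<Rightarrow> (nat \<Rightarrow> real) \<Rightarrow> (nat \<Rightarrow> real) \<Rightarrow> real \<Rightarrow> real" where
  "blocking_prob C c h s lam W =
     (let \<rho> = (\<lambda>k. lam k * s k) in
       (\<Sum>n\<in>{n\<in>state_space C h W. h c + occupied C h n > W}. weight C \<rho> n)
       / (\<Sum>n\<in>state_space C h W. weight C \<rho> n))"

end

theory Submission
  imports Defs
begin

lemma inj_bound:
  fixes f :: "'a \<Rightarrow> real" and g :: "'b \<Rightarrow> real" and \<phi> :: "'a \<Rightarrow> 'b"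
  assumes "finite A" "finite B" "\<phi> ` A \<subseteq> B" "\<And>a. a\<in>A \<Longrightarrow> G * f a \<le> g (\<phi> a)"
    "\<And>b. b\<in>B \<Longrightarrow> card {a\<in>A. \<phi> a = b} \<le> M" "\<And>b. b\<in>B \<Longrightarrow> g b \<ge> 0"
  shows "G * sum f A \<le> real M * sum g B"
proof -
  have "G * sum f A = (\<Sum>a\<in>A. G * f a)" by (simp add: sum_distrib_left)
  also have "\<dots> \<le> (\<Sum>a\<in>A. g (\<phi> a))" by (rule sum_mono) (use assms in auto)
  also have "\<dots> = (\<Sum>b\<in>B. real (card {a\<in>A. \<phi> a = b}) * g b)"
    by (rule sum_fun_comp) (use assms in auto)
  also have "\<dots> \<le> (\<Sum>b\<in>B. real M * g b)"
    by (rule sum_mono) (use assms in \<open>auto intro!: mult_right_mono\<close>)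
  also have "\<dots> = real M * sum g B" by (simp add: sum_distrib_left)
  finally show ?thesis .
qed

lemma fiber_card:
  assumes "finite T" "{a\<in>A. \<phi> a = b} \<subseteq> \<psi> ` T"
  shows "card {a\<in>A. \<phi> a = b} \<le> card T"
  using card_mono[OF finite_imageI[OF assms(1)] assms(2)] card_image_le[OF assms(1), of \<psi>] by linarith

lemma pigeon:
  fixes f :: "'a \<Rightarrow> real"
  assumes "finite X" "card X \<le> C" "C > 0" "sum f X \<ge> Y" "Y > 0"
  shows "\<exists>x\<in>X. f x \<ge> Y / C"
proof (rule ccontr)
  assume "\<not> ?thesis"
  hence lt: "\<And>x. x \<in> X \<Longrightarrow> f x < Y / C" by force
  show False
  proof (cases "X = {}")
    case True thus False using assms by simp
  next
    case False
    hence "sum f X < (\<Sum>x\<in>X. Y / C)" using assms(1) lt by (intro sum_strict_mono) auto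
    also have "\<dots> = card X * (Y / C)" by simp
    also have "\<dots> \<le> C * (Y / C)" using assms by (intro mult_right_mono) auto
    also have "\<dots> = Y" using assms by simp
    finally show False using assms by simp
  qed
qed

lemma exp_sum_le:
  fixes r :: real assumes "r \<ge> 0" "finite X"
  shows "(\<Sum>x\<in>X. r ^ x / fact x) \<le> exp r"
proof -
  have s: "(\<lambda>n. r^n / fact n) sums exp r" using exp_converges[of r] by (simp add: divide_inverse_commute scaleR_conv_of_real)
  have "(\<Sum>x\<in>X. r ^ x / fact x) \<le> suminf (\<lambda>n. r^n / fact n)"
    by (rule sum_le_suminf) (use s assms in \<open>auto simp: sums_iff\<close>)
  thus ?thesis using s by (simp add: sums_iff)
qed

lemma pois_mono:
  fixes r :: real assumes "r > 0" "m \<le> l" "r \<le> real m + 1"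
  shows "r ^ l / fact l \<le> r ^ m / fact m"
  using assms(2)
proof (induction l rule: dec_induct)
  case base then show ?case by simp
next
  case (step l)
  have "r ^ Suc l / fact (Suc l) = (r ^ l / fact l) * (r / (real l + 1))"
    by (simp add: field_simps)
  also have "\<dots> \<le> r ^ l / fact l"
    using assms step by (intro mult_left_le) auto
  finally show ?case using step by linarith
qed

lemma pois_lower:
  fixes r :: real assumes "r > 0" "y \<le> M"
  shows "min 1 r ^ M / fact M \<le> r ^ y / fact y"
proof -
  have "min 1 r ^ M \<le> min 1 r ^ y" using assms by (intro power_decreasing) auto
  also have "\<dots> \<le> r ^ y" using assms by (intro power_mono) auto
  finally have 1: "min 1 r ^ M \<le> r ^ y" .
  have 2: "fact y \<le> (fact M :: real)" using assms by (simp add: fact_mono)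
  show ?thesis using 1 2 assms by (intro frac_le) auto
qed

lemma pois_upper:
  fixes r :: real assumes "r > 0" "y \<le> N"
  shows "r ^ y / fact y \<le> max 1 r ^ N"
proof -
  have f: "(1::real) \<le> fact y" by (rule fact_ge_1)
  have "r ^ y / fact y \<le> r ^ y" using f assms by (simp add: divide_le_eq mult_le_cancel_left1)
  also have "\<dots> \<le> max 1 r ^ y" using assms by (intro power_mono) auto
  also have "\<dots> \<le> max 1 r ^ N" using assms by (intro power_increasing) auto
  finally show ?thesis .
qed


lemma ratio_lemma:
  fixes r G :: real assumes r: "r > 0" and q: "q \<ge> 2"
  shows "\<exists>J. \<forall>j\<ge>J. G * ((real q * r)^j / fact j) \<le> r^(j div q + t) / fact (j div q + t)"
proof (cases "G \<le> 0")
  case True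
  have "G * ((real q * r)^j / fact j) \<le> r^(j div q + t) / fact (j div q + t)" for j
  proof -
    have "G * ((real q * r)^j / fact j) \<le> 0" using True r by (intro mult_nonpos_nonneg) auto
    also have "0 \<le> r^(j div q + t) / fact (j div q + t)" using r by auto
    finally show ?thesis .
  qed
  thus ?thesis by blast
next
  case False
  hence G: "G > 0" by simp
  define M where "M = max 1 (real q * r) * max 1 (1/r)"
  have M1: "M \<ge> 1" unfolding M_def
  proof -
    have "max 1 (real q * r) \<ge> 1" "max 1 (1/r) \<ge> 1" by auto
    thus "1 \<le> max 1 (real q * r) * max 1 (1/r)" by (metis mult_mono' mult_1 zero_le_one)
  qed
  have "(\<lambda>n. inverse (fact n) * (M^2)^n) \<longlonglongrightarrow> 0"
    by (rule summable_LIMSEQ_zero[OF summable_exp])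
  moreover have "1 / (G * M^(2*t)) > 0" using G M1 by simp
  ultimately have "eventually (\<lambda>n. inverse (fact n) * (M^2)^n < 1 / (G * M^(2*t))) sequentially"
    by (rule order_tendstoD(2))
  then obtain N where N: "\<And>m. m \<ge> N \<Longrightarrow> inverse (fact m) * (M^2)^m < 1 / (G * M^(2*t))"
    by (auto simp: eventually_sequentially)
  have "\<forall>j\<ge>2*N+2*t+2. G * ((real q * r)^j / fact j) \<le> r^(j div q + t) / fact (j div q + t)"
  proof (intro allI impI)
    fix j assume j: "j \<ge> 2*N+2*t+2"
    define k where "k = j div q + t"
    define m where "m = j - k"
    have "j div q \<le> j div 2" using q by (intro div_le_mono2) auto
    moreover have "2 * (j div 2) \<le> j" by simp
    ultimately have "2 * (j div q) \<le> j" by (meson le_trans mult_le_mono2)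
    hence k2: "2 * k \<le> j + 2 * t" unfolding k_def by simp
    hence kj: "k \<le> j" using j by linarith
    have mN: "m \<ge> N" using k2 j unfolding m_def by linarith
    have jm: "j \<le> 2*m + 2*t" using k2 kj unfolding m_def by linarith
    have "fact k * fact m * (j choose k) = (fact j :: nat)"
      using binomial_fact_lemma[OF kj] unfolding m_def .
    moreover have "(j choose k) \<ge> 1" using kj by (simp add: Suc_leI)
    ultimately have "fact k * fact m \<le> (fact j :: nat)"
      using mult_le_mono2[of 1 "j choose k" "fact k * fact m"] by simp
    hence "real (fact k * fact m) \<le> real (fact j)" by (simp only: of_nat_le_iff)
    hence fkm: "fact k * fact m \<le> (fact j :: real)" by simp
    have p1: "(real q * r)^j \<le> max 1 (real q * r) ^ j" using r by (intro power_mono) auto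
    have p2: "(1/r)^k \<le> max 1 (1/r) ^ j"
    proof -
      have "(1/r)^k \<le> max 1 (1/r) ^ k" using r by (intro power_mono) auto
      also have "\<dots> \<le> max 1 (1/r) ^ j" using kj by (intro power_increasing) auto
      finally show ?thesis .
    qed
    have "(real q * r)^j * (1/r)^k \<le> max 1 (real q * r) ^ j * max 1 (1/r) ^ j"
      using p1 p2 r by (intro mult_mono) auto
    also have "\<dots> = M ^ j" unfolding M_def by (simp add: power_mult_distrib)
    also have "\<dots> \<le> M ^ (2*m + 2*t)" using M1 jm by (intro power_increasing) auto
    also have "\<dots> = M^(2*t) * (M^2)^m" by (simp add: power_add power_mult[symmetric] mult.commute)
    finally have A: "(real q * r)^j * (1/r)^k \<le> M^(2*t) * (M^2)^m" .
    have B: "G * (M^(2*t) * (M^2)^m) < fact m"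
    proof -
      have "inverse (fact m) * (M^2)^m < 1 / (G * M^(2*t))" using N mN .
      hence "(M^2)^m / fact m < 1 / (G * M^(2*t))" by (simp add: field_simps)
      thus ?thesis using G M1 by (simp add: field_simps)
    qed
    have C: "G * ((real q * r)^j * (1/r)^k) \<le> fact m"
      using mult_left_mono[OF A, of G] B G by linarith
    have Gr: "G * (real q * r)^j \<le> r^k * fact m"
    proof -
      have "(1/r)^k * r^k = 1" using r by (simp add: power_mult_distrib[symmetric])
      hence "G * (real q * r)^j = G * ((real q * r)^j * (1/r)^k) * r^k" by (simp add: mult.assoc)
      also have "\<dots> \<le> fact m * r^k" using C r by (intro mult_right_mono) auto
      finally show ?thesis by (simp add: mult.commute)
    qed
    have "G * (real q * r)^j * fact k \<le> r^k * (fact k * fact m)"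
      using mult_right_mono[OF Gr, of "fact k"] by (simp add: mult_ac)
    also have "\<dots> \<le> r^k * fact j" using fkm r by (intro mult_left_mono) auto
    finally have "G * (real q * r)^j * fact k \<le> r^k * fact j" .
    thus "G * ((real q * r)^j / fact j) \<le> r^k / fact k"
      by (simp add: field_simps)
  qed
  thus ?thesis by blast
qed


lemma occ_split1: "i < C \<Longrightarrow> occupied C h n = h i * n i + (\<Sum>x\<in>{..<C}-{i}. h x * n x)"
  unfolding occupied_def by (simp add: sum.remove)

lemma occ_split2: "i < C \<Longrightarrow> c < C \<Longrightarrow> i \<noteq> c \<Longrightarrow>
   occupied C h n = h i * n i + h c * n c + (\<Sum>x\<in>{..<C}-{i,c}. h x * n x)"
proof -
  assume a: "i < C" "c < C" "i \<noteq> c"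
  have "occupied C h n = h i * n i + (\<Sum>x\<in>{..<C}-{i}. h x * n x)" by (rule occ_split1[OF a(1)])
  also have "(\<Sum>x\<in>{..<C}-{i}. h x * n x) = h c * n c + (\<Sum>x\<in>{..<C}-{i}-{c}. h x * n x)"
    using a by (intro sum.remove) auto
  also have "{..<C}-{i}-{c} = {..<C}-{i,c}" by auto
  finally show ?thesis by simp
qed

lemma weight_split1: "i < C \<Longrightarrow> weight C r n = (r i ^ n i / fact (n i)) * (\<Prod>x\<in>{..<C}-{i}. r x ^ n x / fact (n x))"
  unfolding weight_def by (simp add: prod.remove)

lemma weight_split2: "i < C \<Longrightarrow> c < C \<Longrightarrow> i \<noteq> c \<Longrightarrow>
   weight C r n = (r i ^ n i / fact (n i)) * (r c ^ n c / fact (n c)) * (\<Prod>x\<in>{..<C}-{i,c}. r x ^ n x / fact (n x))"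
proof -
  assume a: "i < C" "c < C" "i \<noteq> c"
  have "weight C r n = (r i ^ n i / fact (n i)) * (\<Prod>x\<in>{..<C}-{i}. r x ^ n x / fact (n x))" by (rule weight_split1[OF a(1)])
  also have "(\<Prod>x\<in>{..<C}-{i}. r x ^ n x / fact (n x)) = (r c ^ n c / fact (n c)) * (\<Prod>x\<in>{..<C}-{i}-{c}. r x ^ n x / fact (n x))"
    using a by (intro prod.remove) auto
  also have "{..<C}-{i}-{c} = {..<C}-{i,c}" by auto
  finally show ?thesis by simp
qed

lemma sum_upd:
  assumes "finite X" "c' \<in> X"
  shows "(\<Sum>x\<in>X. h x * real ((n(c':=v)) x)) = (\<Sum>x\<in>X. h x * real (n x)) - h c' * n c' + h c' * v"
proof -
  have "(\<Sum>x\<in>X. h x * real ((n(c':=v)) x)) = h c' * v + (\<Sum>x\<in>X-{c'}. h x * real ((n(c':=v)) x))"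
    using assms by (simp add: sum.remove)
  also have "(\<Sum>x\<in>X-{c'}. h x * real ((n(c':=v)) x)) = (\<Sum>x\<in>X-{c'}. h x * real (n x))"
    by (rule sum.cong) auto
  also have "(\<Sum>x\<in>X. h x * real (n x)) = h c' * n c' + (\<Sum>x\<in>X-{c'}. h x * real (n x))"
    using assms by (simp add: sum.remove)
  ultimately show ?thesis by simp
qed

lemma prod_upd_dec:
  fixes r :: "nat \<Rightarrow> real"
  assumes "finite X" "c' \<in> X" "n c' \<ge> 1"
  shows "r c' * (\<Prod>x\<in>X. r x ^ (n(c':=n c' - 1)) x / fact ((n(c':=n c' - 1)) x))
         = real (n c') * (\<Prod>x\<in>X. r x ^ n x / fact (n x))"
proof -
  define P where "P = (\<Prod>x\<in>X-{c'}. r x ^ n x / fact (n x))"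
  have 1: "(\<Prod>x\<in>X. r x ^ (n(c':=n c' - 1)) x / fact ((n(c':=n c' - 1)) x))
        = r c' ^ (n c' - 1) / fact (n c' - 1) * (\<Prod>x\<in>X-{c'}. r x ^ (n(c':=n c' - 1)) x / fact ((n(c':=n c' - 1)) x))"
    using assms by (simp add: prod.remove)
  have 2: "(\<Prod>x\<in>X-{c'}. r x ^ (n(c':=n c' - 1)) x / fact ((n(c':=n c' - 1)) x)) = P"
    unfolding P_def by (rule prod.cong) auto
  have 3: "(\<Prod>x\<in>X. r x ^ n x / fact (n x)) = r c' ^ n c' / fact (n c') * P"
    using assms unfolding P_def by (simp add: prod.remove)
  obtain k where k: "n c' = Suc k" using assms(3) by (cases "n c'") auto
  have 4: "r c' * (r c' ^ k / fact k) = real (Suc k) * (r c' ^ Suc k / fact (Suc k))"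
  proof -
    have "real (Suc k) * (r c' ^ Suc k / fact (Suc k)) = real (Suc k) * (r c' ^ Suc k / (real (Suc k) * fact k))"
      by (simp only: fact_Suc of_nat_mult of_nat_fact)
    also have "\<dots> = r c' ^ Suc k / fact k" by (simp del: of_nat_Suc)
    finally show ?thesis by simp
  qed
  show ?thesis unfolding 1 2 3 using 4 k by (simp add: mult.assoc[symmetric])
qed

lemma ss_iff: "n \<in> state_space C h W \<longleftrightarrow> (\<forall>c. C \<le> c \<longrightarrow> n c = 0) \<and> occupied C h n \<le> W"
  unfolding state_space_def by simp

lemma term_le_occ:
  assumes "\<forall>c<C. h c > 0" "c < C"
  shows "h c * n c \<le> occupied C h n"
  unfolding occupied_def
  using assms by (intro member_le_sum) (auto intro: mult_nonneg_nonneg less_imp_le)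

lemma finite_ss:
  assumes hp: "\<forall>c<C. h c > 0"
  shows "finite (state_space C h W)"
proof -
  define N where "N = nat \<lceil>\<Sum>c<C. \<bar>W\<bar> / h c\<rceil>"
  have "state_space C h W \<subseteq> {f. \<forall>x. (x \<in> {..<C} \<longrightarrow> f x \<in> {..N}) \<and> (x \<notin> {..<C} \<longrightarrow> f x = 0)}"
  proof (intro subsetI CollectI allI conjI impI)
    fix n x assume n: "n \<in> state_space C h W" and x': "x \<in> {..<C}"
    have x: "x < C" using x' by simp
    have "h x * n x \<le> W" using term_le_occ[OF hp x, of n] n by (auto simp: ss_iff)
    hence "h x * n x \<le> \<bar>W\<bar>" by linarith
    hence "real (n x) \<le> \<bar>W\<bar> / h x" using hp x by (simp add: field_simps)
    also have "\<dots> \<le> (\<Sum>c<C. \<bar>W\<bar> / h c)" using hp x by (intro member_le_sum) auto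
    finally have "real (n x) \<le> real N" unfolding N_def using real_nat_ceiling_ge by (rule order_trans)
    thus "n x \<in> {..N}" by simp
  next
    fix n x assume n: "n \<in> state_space C h W" and x: "x \<notin> {..<C}"
    thus "n x = 0" by (auto simp: ss_iff)
  qed
  moreover have "finite {f. \<forall>x. (x \<in> {..<C} \<longrightarrow> f x \<in> {..N}) \<and> (x \<notin> {..<C} \<longrightarrow> f x = (0::nat))}"
    by (rule finite_set_of_finite_funs) auto
  ultimately show ?thesis by (rule finite_subset)
qed

lemma floor_fill:
  fixes d R :: real assumes "d > 0" "R \<ge> 0"
  shows "d * real (nat \<lfloor>R/d\<rfloor>) \<le> R" "R < d * real (nat \<lfloor>R/d\<rfloor>) + d"
proof -
  have e: "real (nat \<lfloor>R/d\<rfloor>) = of_int \<lfloor>R/d\<rfloor>" using assms by simp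
  have "d * of_int \<lfloor>R/d\<rfloor> \<le> d * (R/d)" using assms by (intro mult_left_mono) auto
  thus "d * real (nat \<lfloor>R/d\<rfloor>) \<le> R" using e assms by simp
  have "R/d < of_int \<lfloor>R/d\<rfloor> + 1" by linarith
  hence "d * (R/d) < d * (of_int \<lfloor>R/d\<rfloor> + 1)" using assms by (intro mult_strict_left_mono) auto
  thus "R < d * real (nat \<lfloor>R/d\<rfloor>) + d" using e assms by (simp add: algebra_simps)
qed

lemma div_bounds:
  assumes "q > 0"
  shows "real (j div q) \<le> real j / real q" "real j / real q < real (j div q) + 1"
proof -
  have e: "j = q * (j div q) + j mod q" by simp
  have m: "j mod q < q" using assms by simp
  have "real j = real q * real (j div q) + real (j mod q)" using e by (metis of_nat_add of_nat_mult)
  thus "real (j div q) \<le> real j / real q" "real j / real q < real (j div q) + 1"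
    using m assms by (auto simp: field_simps)
qed


lemma ratio_pos:
  fixes r :: real assumes r: "r > 0" and q: "q \<ge> 2"
  shows "\<exists>c1>0. \<forall>j. c1 * ((real q * r)^j / fact j) \<le> r^(j div q + t) / fact (j div q + t)"
proof -
  obtain J where J: "\<And>j. j \<ge> J \<Longrightarrow> 1 * ((real q * r)^j / fact j) \<le> r^(j div q + t) / fact (j div q + t)"
    using ratio_lemma[OF r q, of 1 t] by blast
  define f where "f = (\<lambda>j. (r^(j div q + t) / fact (j div q + t)) / ((real q * r)^j / fact j))"
  define c1 where "c1 = Min (insert 1 (f ` {..<J}))"
  have fpos: "f j > 0" for j unfolding f_def using r q by simp
  have c1pos: "c1 > 0" unfolding c1_def using fpos by (subst Min_gr_iff) auto
  have c1le1: "c1 \<le> 1" unfolding c1_def by (intro Min_le) auto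
  have "c1 * ((real q * r)^j / fact j) \<le> r^(j div q + t) / fact (j div q + t)" for j
  proof (cases "j \<ge> J")
    case True
    have "c1 * ((real q * r)^j / fact j) \<le> 1 * ((real q * r)^j / fact j)"
      using c1le1 r by (intro mult_right_mono) auto
    also have "\<dots> \<le> r^(j div q + t) / fact (j div q + t)" using J[OF True] .
    finally show ?thesis .
  next
    case False
    hence "c1 \<le> f j" unfolding c1_def by (intro Min_le) auto
    hence "c1 * ((real q * r)^j / fact j) \<le> f j * ((real q * r)^j / fact j)"
      using r by (intro mult_right_mono) auto
    also have "\<dots> = r^(j div q + t) / fact (j div q + t)" unfolding f_def using r q by simp
    finally show ?thesis .
  qed
  thus ?thesis using c1pos by blast
qed

lemma F_bound:
  fixes h r :: "nat \<Rightarrow> real"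
  assumes hp: "\<forall>c<C. h c > 0" and rp: "\<forall>c<C. r c > 0" and iC: "i < C" and q: "q > 0"
  shows "(\<Sum>n\<in>state_space C h W. weight C r n)
     \<le> exp (r i) * (\<Sum>n\<in>state_space C (h(i := h i / real q)) W. weight C (r(i := real q * r i)) n)"
proof -
  define hN where "hN = h(i := h i / real q)"
  define rN where "rN = r(i := real q * r i)"
  define SS where "SS = state_space C h W"
  define SS' where "SS' = state_space C hN W"
  define P where "P = (\<lambda>n::nat\<Rightarrow>nat. n(i := 0))"
  define R where "R = (\<lambda>n::nat\<Rightarrow>nat. \<Prod>x\<in>{..<C}-{i}. r x ^ n x / fact (n x))"
  have hNp: "\<forall>c<C. hN c > 0" unfolding hN_def using hp q by auto
  have fin: "finite SS" unfolding SS_def by (rule finite_ss[OF hp])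
  have fin': "finite SS'" unfolding SS'_def by (rule finite_ss[OF hNp])
  have Rpos: "R n \<ge> 0" for n unfolding R_def using rp by (intro prod_nonneg) auto
  have wR: "weight C r n = r i ^ n i / fact (n i) * R n" for n unfolding R_def by (rule weight_split1[OF iC])
  have wR': "weight C rN n = (real q * r i) ^ n i / fact (n i) * R n" for n
  proof -
    have "weight C rN n = rN i ^ n i / fact (n i) * (\<Prod>x\<in>{..<C}-{i}. rN x ^ n x / fact (n x))"
      by (rule weight_split1[OF iC])
    also have "(\<Prod>x\<in>{..<C}-{i}. rN x ^ n x / fact (n x)) = R n" unfolding R_def rN_def by (intro prod.cong) auto
    moreover have "rN i = real q * r i" unfolding rN_def by simp
    ultimately show ?thesis by simp
  qed
  have RP: "R (P n) = R n" for n unfolding R_def P_def by (intro prod.cong) auto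
  have PSS: "P ` SS \<subseteq> SS'"
  proof
    fix m assume "m \<in> P ` SS"
    then obtain n where n: "n \<in> SS" and m: "m = P n" by auto
    have "occupied C hN m = hN i * m i + (\<Sum>x\<in>{..<C}-{i}. hN x * m x)" by (rule occ_split1[OF iC])
    also have "\<dots> = (\<Sum>x\<in>{..<C}-{i}. h x * n x)" unfolding m P_def hN_def by (auto intro!: sum.cong)
    also have "\<dots> \<le> h i * n i + (\<Sum>x\<in>{..<C}-{i}. h x * n x)" using hp iC by auto
    also have "\<dots> = occupied C h n" by (rule occ_split1[OF iC, symmetric])
    also have "\<dots> \<le> W" using n unfolding SS_def ss_iff by auto
    finally show "m \<in> SS'" using n iC unfolding SS'_def SS_def ss_iff m P_def by auto
  qed
  have "(\<Sum>n\<in>SS. weight C r n) = (\<Sum>m\<in>P ` SS. \<Sum>n\<in>{n\<in>SS. P n = m}. weight C r n)"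
    by (rule sum.image_gen[OF fin])
  also have "\<dots> \<le> (\<Sum>m\<in>P ` SS. exp (r i) * weight C rN m)"
  proof (rule sum_mono)
    fix m assume m: "m \<in> P ` SS"
    define Fb where "Fb = {n\<in>SS. P n = m}"
    have mi: "m i = 0" using m unfolding P_def by auto
    have e1: "(\<Sum>n\<in>Fb. weight C r n) = (\<Sum>n\<in>Fb. r i ^ n i / fact (n i) * R m)"
    proof (rule sum.cong)
      fix n assume "n \<in> Fb"
      hence "P n = m" unfolding Fb_def by auto
      hence "R n = R m" using RP[of n] by simp
      thus "weight C r n = r i ^ n i / fact (n i) * R m" using wR[of n] by simp
    qed simp
    have inj: "inj_on (\<lambda>n. n i) Fb"
    proof (rule inj_onI)
      fix n n' assume nn: "n \<in> Fb" "n' \<in> Fb" "n i = n' i"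
      hence eq: "n(i:=0) = n'(i:=0)" unfolding Fb_def P_def by simp
      show "n = n'"
      proof
        fix x show "n x = n' x"
        proof (cases "x = i")
          case True thus ?thesis using nn by simp
        next
          case False thus ?thesis using fun_cong[OF eq, of x] by simp
        qed
      qed
    qed
    have e2: "(\<Sum>n\<in>Fb. r i ^ n i / fact (n i)) = (\<Sum>x\<in>(\<lambda>n. n i) ` Fb. r i ^ x / fact x)"
      using sum.reindex[OF inj, of "\<lambda>x. r i ^ x / fact x"] by (simp add: comp_def)
    have e3: "(\<Sum>x\<in>(\<lambda>n. n i) ` Fb. r i ^ x / fact x) \<le> exp (r i)"
      using rp iC fin unfolding Fb_def by (intro exp_sum_le) auto
    have "(\<Sum>n\<in>Fb. weight C r n) = (\<Sum>n\<in>Fb. r i ^ n i / fact (n i)) * R m"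
      unfolding e1 by (simp add: sum_distrib_right)
    also have "\<dots> \<le> exp (r i) * R m" using e2 e3 Rpos[of m] by (intro mult_right_mono) auto
    also have "R m = weight C rN m" using wR'[of m] mi by simp
    finally show "(\<Sum>n\<in>{n\<in>SS. P n = m}. weight C r n) \<le> exp (r i) * weight C rN m" unfolding Fb_def .
  qed
  also have "\<dots> = exp (r i) * (\<Sum>m\<in>P ` SS. weight C rN m)" by (simp add: sum_distrib_left)
  also have "\<dots> \<le> exp (r i) * (\<Sum>m\<in>SS'. weight C rN m)"
  proof -
    have "(\<Sum>m\<in>P ` SS. weight C rN m) \<le> (\<Sum>m\<in>SS'. weight C rN m)"
      using PSS fin' by (intro sum_mono2) (auto simp: weight_def rN_def rp iC less_imp_le intro!: prod_nonneg)
    thus ?thesis by simp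
  qed
  finally show ?thesis unfolding SS_def SS'_def hN_def rN_def .
qed


lemma mainA:
  fixes C :: nat and h r :: "nat \<Rightarrow> real" and q i c :: nat and G :: real
  assumes hp: "\<forall>c<C. h c > 0" and rp: "\<forall>c<C. r c > 0" and q2: "q \<ge> 2" and iC: "i < C"
    and cC: "c < C" and ci: "c \<noteq> i" and G: "G > 0"
  shows "\<exists>W0. \<forall>W\<ge>W0. G * (\<Sum>n\<in>{n\<in>state_space C (h(i := h i / real q)) W. (h(i := h i / real q)) c + occupied C (h(i := h i / real q)) n > W}. weight C (r(i := real q * r i)) n)
     \<le> (\<Sum>n\<in>{n\<in>state_space C h W. h c + occupied C h n > W}. weight C r n)"
proof -
  define hN where "hN = h(i := h i / real q)"
  define rN where "rN = r(i := real q * r i)"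
  define hi where "hi = h i"
  define d where "d = h c"
  define ri where "ri = r i"
  define rc where "rc = r c"
  define X where "X = {..<C} - {i,c}"
  define Z where "Z = (\<lambda>n::nat\<Rightarrow>nat. \<Sum>x\<in>X. h x * real (n x))"
  define Rw where "Rw = (\<lambda>n::nat\<Rightarrow>nat. \<Prod>x\<in>X. r x ^ n x / fact (n x))"
  define a where "a = (\<lambda>x::nat. ri ^ x / fact x)"
  define b where "b = (\<lambda>x::nat. (real q * ri) ^ x / fact x)"
  define p where "p = (\<lambda>x::nat. rc ^ x / fact x)"
  define Hs where "Hs = (\<Sum>x<C. h x)"
  define rs where "rs = (\<Sum>x<C. r x)"
  have ic: "i \<noteq> c" using ci by simp
  have hi: "hi > 0" using hp iC unfolding hi_def by simp
  have d: "d > 0" using hp cC unfolding d_def by simp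
  have ri: "ri > 0" using rp iC unfolding ri_def by simp
  have rc: "rc > 0" using rp cC unfolding rc_def by simp
  have q0: "real q > 0" "q > 0" using q2 by auto
  have C0: "real C > 0" using iC by simp
  have finX: "finite X" unfolding X_def by simp
  have cardX: "card X \<le> C" unfolding X_def using card_mono[of "{..<C}" "{..<C} - {i,c}"] by simp
  have Xsub: "x < C \<and> x \<noteq> i \<and> x \<noteq> c" if "x \<in> X" for x using that unfolding X_def by auto
  have hX: "0 < h x \<and> h x \<le> Hs" if "x \<in> X" for x
  proof -
    have "h x \<le> Hs" unfolding Hs_def using Xsub[OF that] hp by (intro member_le_sum) (auto simp: less_imp_le)
    thus ?thesis using Xsub[OF that] hp by auto
  qed
  have rX: "0 < r x \<and> r x \<le> rs" if "x \<in> X" for x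
  proof -
    have "r x \<le> rs" unfolding rs_def using Xsub[OF that] rp by (intro member_le_sum) (auto simp: less_imp_le)
    thus ?thesis using Xsub[OF that] rp by auto
  qed
  have "h c \<le> Hs" unfolding Hs_def using hp cC by (intro member_le_sum) (auto simp: less_imp_le)
  hence Hs0: "Hs > 0" using d unfolding d_def by simp
  have Zge: "Z n \<ge> 0" for n unfolding Z_def
  proof (intro sum_nonneg)
    fix x assume "x \<in> X" thus "0 \<le> h x * real (n x)" using hX[of x] by simp
  qed
  have Rwpos: "Rw n > 0" for n unfolding Rw_def using rX by (intro prod_pos) auto
  have apos: "a x > 0" for x unfolding a_def using ri by simp
  have bpos: "b x > 0" for x unfolding b_def using ri q0 by simp
  have ppos: "p x > 0" for x unfolding p_def using rc by simp
  have occ: "occupied C h n = hi * n i + d * n c + Z n" for n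
    using occ_split2[OF iC cC ic, of h n] unfolding hi_def d_def Z_def X_def .
  have occN: "occupied C hN n = hi / real q * n i + d * n c + Z n" for n
  proof -
    have "occupied C hN n = hN i * n i + hN c * n c + (\<Sum>x\<in>{..<C}-{i,c}. hN x * n x)"
      by (rule occ_split2[OF iC cC ic])
    also have "(\<Sum>x\<in>{..<C}-{i,c}. hN x * n x) = Z n" unfolding Z_def X_def hN_def by (intro sum.cong) auto
    moreover have "hN i = hi / real q" "hN c = d" unfolding hN_def hi_def d_def using ci by auto
    ultimately show ?thesis by simp
  qed
  have wt: "weight C r n = a (n i) * p (n c) * Rw n" for n
    using weight_split2[OF iC cC ic, of r n] unfolding a_def p_def Rw_def X_def ri_def rc_def .
  have wtN: "weight C rN n = b (n i) * p (n c) * Rw n" for n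
  proof -
    have "weight C rN n = (rN i ^ n i / fact (n i)) * (rN c ^ n c / fact (n c)) * (\<Prod>x\<in>{..<C}-{i,c}. rN x ^ n x / fact (n x))"
      by (rule weight_split2[OF iC cC ic])
    also have "(\<Prod>x\<in>{..<C}-{i,c}. rN x ^ n x / fact (n x)) = Rw n" unfolding Rw_def X_def rN_def by (intro prod.cong) auto
    moreover have "rN i = real q * ri" "rN c = rc" unfolding rN_def ri_def rc_def using ci by auto
    ultimately show ?thesis unfolding b_def p_def by simp
  qed
  have Zupd: "Z (n(i := u, c := v)) = Z n" for n u v unfolding Z_def X_def by (intro sum.cong) auto
  have Rwupd: "Rw (n(i := u, c := v)) = Rw n" for n u v unfolding Rw_def X_def by (intro prod.cong) auto
  have Zdec: "Z (n(c' := n c' - 1)) = Z n - h c'" if "c' \<in> X" "n c' \<ge> 1" for n c'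
  proof -
    have "Z (n(c' := n c' - 1)) = Z n - h c' * n c' + h c' * real (n c' - 1)"
      unfolding Z_def by (rule sum_upd[OF finX that(1)])
    also have "real (n c' - 1) = real (n c') - 1" using that(2) by (simp add: of_nat_diff)
    finally have e: "Z (n(c' := n c' - 1)) = Z n - h c' * n c' + h c' * (real (n c') - 1)" .
    have "h c' * (real (n c') - 1) = h c' * n c' - h c'" by (simp add: right_diff_distrib)
    thus ?thesis using e by linarith
  qed
  have Rwdec: "r c' * Rw (n(c' := n c' - 1)) = real (n c') * Rw n" if "c' \<in> X" "n c' \<ge> 1" for n c'
    unfolding Rw_def by (rule prod_upd_dec[where n=n, OF finX that])
  have shI: "m \<in> {n\<in>state_space C h W. h c + occupied C h n > W}"
    if "\<forall>x. C \<le> x \<longrightarrow> m x = 0" "hi * m i + d * m c + Z m \<le> W" "W < d + (hi * m i + d * m c + Z m)" for m W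
    using that unfolding ss_iff occ d_def by auto
  define s0 where "s0 = nat \<lceil>d / hi\<rceil> + 1"
  have s0: "hi * (real s0 - 1) \<ge> d"
  proof -
    have "real s0 - 1 \<ge> d / hi" unfolding s0_def by simp linarith
    thus ?thesis using hi by (simp add: field_simps)
  qed
  have s0': "hi * real s0 - hi \<ge> d" using s0 by (simp add: algebra_simps)
  define T where "T = nat \<lceil>hi * real s0 / d\<rceil> + 1"
  have T: "real T \<ge> hi * real s0 / d + 1" unfolding T_def by simp linarith
  obtain c1 where c1: "c1 > 0" "\<And>j. c1 * b j \<le> a (j div q + s0)"
    using ratio_pos[OF ri q2, of s0] unfolding a_def b_def by blast
  define M1 where "M1 = q * T + 1"
  define G1 where "G1 = 3 * G * real M1"
  define N0 where "N0 = nat \<lceil>G1 * rc / c1 + rc + hi * real s0 / d\<rceil> + 1"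
  have "M1 > 0" unfolding M1_def by simp
  hence M1pos: "real M1 > 0" by simp
  have G1: "G1 > 0" unfolding G1_def using G M1pos by simp
  have N0: "real N0 \<ge> G1 * rc / c1" "real N0 \<ge> rc + hi * real s0 / d" "N0 \<ge> 1"
  proof -
    have x: "G1 * rc / c1 \<ge> 0" "hi * real s0 / d \<ge> 0" using G1 rc c1 hi d by auto
    have "real N0 \<ge> G1 * rc / c1 + rc + hi * real s0 / d + 1" unfolding N0_def by simp linarith
    thus "real N0 \<ge> G1 * rc / c1" "real N0 \<ge> rc + hi * real s0 / d" using x rc by linarith+
    show "N0 \<ge> 1" unfolding N0_def by simp
  qed
  define P2max where "P2max = max 1 rc ^ N0"
  define B2 where "B2 = N0 + 1 + nat \<lceil>hi / d\<rceil>"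
  define P2min where "P2min = min 1 rc ^ B2 / fact B2"
  have P2min: "P2min > 0" unfolding P2min_def using rc by simp
  have P2max: "P2max > 0" unfolding P2max_def by simp
  define M2 where "M2 = q * N0 + 1"
  define G2 where "G2 = 3 * G * real M2"
  obtain J0 where J0: "\<And>j. j \<ge> J0 \<Longrightarrow> (G2 * P2max / P2min) * b j \<le> a (j div q)"
    using ratio_lemma[OF ri q2, of "G2 * P2max / P2min" 0] unfolding a_def b_def by auto
  define Rb where "Rb = hi * real J0 / real q + d * real N0"
  define B3 where "B3 = nat \<lceil>(Rb + Hs) / d\<rceil>"
  define P3min where "P3min = min 1 rc ^ B3 / fact B3"
  have P3min: "P3min > 0" unfolding P3min_def using rc by simp
  define Bmax where "Bmax = max 1 (real q * ri) ^ J0"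
  have Bmax: "Bmax > 0" unfolding Bmax_def by simp
  define M3 where "M3 = C * J0 * N0 + 1"
  define G3 where "G3 = 3 * G * real M3"
  have "M3 > 0" unfolding M3_def by simp
  hence M3pos: "real M3 > 0" by simp
  have G3: "G3 > 0" unfolding G3_def using G M3pos by simp
  define K3 where "K3 = G3 * rs * Bmax * P2max / P3min"
  have "r c \<le> rs" unfolding rs_def using rp cC by (intro member_le_sum) (auto simp: less_imp_le)
  hence rs0: "rs > 0" using rc unfolding rc_def by simp
  have K3: "K3 \<ge> 0" unfolding K3_def using G3 rs0 Bmax P2max P3min by simp
  define W0 where "W0 = Rb + real C * Hs * (K3 + 1)"
  have "\<forall>W\<ge>W0. G * (\<Sum>n\<in>{n\<in>state_space C hN W. hN c + occupied C hN n > W}. weight C rN n)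
     \<le> (\<Sum>n\<in>{n\<in>state_space C h W. h c + occupied C h n > W}. weight C r n)"
  proof (intro allI impI)
    fix W assume W: "W \<ge> W0"
    define Sh' where "Sh' = {n\<in>state_space C hN W. hN c + occupied C hN n > W}"
    define Sh where "Sh = {n\<in>state_space C h W. h c + occupied C h n > W}"
    have finSh: "finite Sh" unfolding Sh_def using finite_ss[OF hp, of W] by simp
    have hNp: "\<forall>c<C. hN c > 0" unfolding hN_def using hp q0 by auto
    have finSh': "finite Sh'" unfolding Sh'_def using finite_ss[OF hNp, of W] by simp
    have wnn: "weight C r n \<ge> 0" for n using wt apos ppos Rwpos by (simp add: less_imp_le)
    have memN: "(\<forall>x. C \<le> x \<longrightarrow> n x = 0) \<and> hi / real q * n i + d * n c + Z n \<le> W \<and> W < d + (hi / real q * n i + d * n c + Z n)"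
      if "n \<in> Sh'" for n
      using that unfolding Sh'_def ss_iff occN by (auto simp: hN_def d_def ci)
    define A1 where "A1 = {n\<in>Sh'. N0 \<le> n c}"
    define A2 where "A2 = {n\<in>Sh'. n c < N0 \<and> J0 \<le> n i}"
    define A3 where "A3 = {n\<in>Sh'. n c < N0 \<and> n i < J0}"
    have S1: "3 * G * (\<Sum>n\<in>A1. weight C rN n) \<le> (\<Sum>n\<in>Sh. weight C r n)"
    proof -
      define \<phi> where "\<phi> = (\<lambda>n::nat\<Rightarrow>nat. n(i := n i div q + s0, c := nat \<lfloor>(W - hi * real (n i div q + s0) - Z n) / d\<rfloor>))"
      have key: "\<phi> n \<in> Sh \<and> G1 * weight C rN n \<le> weight C r (\<phi> n) \<and> \<phi> n c < n c \<and> n c < \<phi> n c + T \<and> \<phi> n i = n i div q + s0"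
        if nA: "n \<in> A1" for n
      proof -
        have nS: "n \<in> Sh'" and y0: "N0 \<le> n c" using nA unfolding A1_def by auto
        note mn = memN[OF nS]
        define j where "j = n i"
        define y where "y = n c"
        define k where "k = j div q + s0"
        define R where "R = W - hi * real k - Z n"
        define mc where "mc = nat \<lfloor>R / d\<rfloor>"
        have \<phi>n: "\<phi> n = n(i := k, c := mc)" unfolding \<phi>_def k_def j_def mc_def R_def by simp
        have o1: "hi / real q * j + d * y + Z n \<le> W" and o2: "W < d + (hi / real q * j + d * y + Z n)"
          using mn unfolding j_def y_def by auto
        have kb1: "real k \<le> real j / real q + s0" and kb2: "real j / real q + s0 < real k + 1"
          using div_bounds[OF q0(2), of j] unfolding k_def by auto
        have hk1: "hi * real k \<le> hi * real j / real q + hi * s0"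
          using mult_left_mono[OF kb1, of hi] hi by (simp add: algebra_simps)
        have hk2: "hi * real j / real q + hi * s0 < hi * real k + hi"
          using mult_strict_left_mono[OF kb2, of hi] hi by (simp add: algebra_simps)
        have hj: "hi / real q * j = hi * real j / real q" by simp
        have dN0: "d * real N0 \<ge> hi * real s0"
        proof -
          have "real N0 \<ge> hi * real s0 / d" using N0(2) rc by linarith
          thus ?thesis using d by (simp add: field_simps)
        qed
        have yN0: "d * real y \<ge> d * real N0" using y0 d unfolding y_def by simp
        have R0: "R \<ge> 0" unfolding R_def using o1 hk1 hj dN0 yN0 by linarith
        have f1: "d * real mc \<le> R" and f2: "R < d * real mc + d"
          using floor_fill[OF d R0] unfolding mc_def by auto
        have occ\<phi>: "occupied C h (\<phi> n) = hi * real k + d * real mc + Z n"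
          unfolding occ \<phi>n using Zupd ci by simp
        have inSh: "\<phi> n \<in> Sh"
        proof -
          have "\<forall>x. C \<le> x \<longrightarrow> (\<phi> n) x = 0" using mn iC cC unfolding \<phi>n by auto
          moreover have "hi * (\<phi> n) i + d * (\<phi> n) c + Z (\<phi> n) = hi * real k + d * real mc + Z n"
            unfolding \<phi>n using Zupd ci by simp
          ultimately show ?thesis unfolding Sh_def using shI[of "\<phi> n" W] f1 f2 unfolding R_def by auto
        qed
        have mcy: "mc < y"
        proof -
          have "R < d * real y" unfolding R_def using o2 hk2 hj s0' by linarith
          hence "d * real mc < d * real y" using f1 by linarith
          thus ?thesis using d by simp
        qed
        have ymc: "y < mc + T"
        proof -
          have "d * real y - hi * real s0 \<le> R" unfolding R_def using o1 hk1 hj by linarith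
          hence "d * real y < d * real mc + d + hi * real s0" using f2 by linarith
          hence "real y < real mc + 1 + hi * real s0 / d" using d by (simp add: field_simps)
          hence "real y < real mc + real T" using T by linarith
          thus ?thesis by linarith
        qed
        have mcrc: "rc \<le> real mc + 1"
        proof -
          have "d * real y - hi * real s0 \<le> R" unfolding R_def using o1 hk1 hj by linarith
          moreover have "d * (real mc + 1) = d * real mc + d" by (simp add: algebra_simps)
          ultimately have "d * real N0 - hi * real s0 < d * (real mc + 1)" using f2 yN0 by linarith
          moreover have "d * real N0 \<ge> d * rc + hi * real s0"
          proof -
            have "d * real N0 \<ge> d * (rc + hi * real s0 / d)" using N0(2) d by (intro mult_left_mono) auto
            thus ?thesis using d by (simp add: algebra_simps)
          qed
          ultimately have "d * rc < d * (real mc + 1)" by linarith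
          thus ?thesis using d by simp
        qed
        have wphi: "weight C r (\<phi> n) = a k * p mc * Rw n" unfolding wt \<phi>n using Rwupd ci by simp
        have wn: "weight C rN n = b j * p y * Rw n" unfolding wtN j_def y_def ..
        have y1: "y \<ge> 1" using y0 N0(3) unfolding y_def by simp
        have pmono: "p (y - 1) \<le> p mc" unfolding p_def using mcy mcrc by (intro pois_mono[OF rc]) auto
        have pstep: "p y * real y = rc * p (y - 1)"
        proof -
          obtain u where u: "y = Suc u" using y1 by (cases y) auto
          have "p y * real y = real (Suc u) * (rc ^ Suc u / (real (Suc u) * fact u))"
            unfolding p_def u by (simp only: fact_Suc of_nat_mult of_nat_fact mult.commute)
          also have "\<dots> = rc ^ Suc u / fact u" by (simp del: of_nat_Suc)
          also have "\<dots> = rc * p (y - 1)" unfolding p_def u by simp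
          finally show ?thesis .
        qed
        have Gy: "G1 * rc \<le> c1 * real y"
        proof -
          have "G1 * rc / c1 \<le> real y" using N0(1) yN0 d by (smt (verit) mult_le_cancel_left_pos)
          thus ?thesis using c1(1) by (simp add: field_simps)
        qed
        have "rc * (G1 * (b j * p y)) = (G1 * rc) * (b j * p y)" by (simp add: algebra_simps)
        also have "\<dots> \<le> (c1 * real y) * (b j * p y)" using Gy bpos ppos by (intro mult_right_mono) (auto simp: less_imp_le)
        also have "\<dots> = rc * (c1 * b j * p (y - 1))" using pstep by (simp add: algebra_simps)
        finally have "G1 * (b j * p y) \<le> c1 * b j * p (y - 1)" using rc by simp
        also have "\<dots> \<le> a k * p mc"
          using c1(2)[of j] pmono ppos bpos apos c1(1) unfolding k_def by (intro mult_mono) (auto simp: less_imp_le)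
        finally have "G1 * (b j * p y) * Rw n \<le> a k * p mc * Rw n" using Rwpos[of n] by (simp add: mult_right_mono less_imp_le)
        hence "G1 * weight C rN n \<le> weight C r (\<phi> n)" unfolding wphi wn by (simp add: algebra_simps)
        moreover have "\<phi> n i = n i div q + s0" unfolding \<phi>n k_def j_def using ci by simp
        moreover have "\<phi> n c = mc" unfolding \<phi>n by simp
        ultimately show ?thesis using inSh mcy ymc unfolding y_def by simp
      qed
      have "G1 * (\<Sum>n\<in>A1. weight C rN n) \<le> real M1 * (\<Sum>n\<in>Sh. weight C r n)"
      proof (rule inj_bound[where \<phi>=\<phi>])
        show "finite A1" using finSh' unfolding A1_def by simp
        show "finite Sh" by (rule finSh)
        show "\<phi> ` A1 \<subseteq> Sh" using key by blast
        show "G1 * weight C rN n \<le> weight C r (\<phi> n)" if "n \<in> A1" for n using key[OF that] by blast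
        show "weight C r bb \<ge> 0" for bb by (rule wnn)
        show "card {n \<in> A1. \<phi> n = bb} \<le> M1" if "bb \<in> Sh" for bb
        proof -
          define \<psi> where "\<psi> = (\<lambda>(x::nat, z::nat). bb(i := q * (bb i - s0) + x, c := bb c + 1 + z))"
          have "{n \<in> A1. \<phi> n = bb} \<subseteq> \<psi> ` ({..<q} \<times> {..<T})"
          proof
            fix n assume "n \<in> {n \<in> A1. \<phi> n = bb}"
            hence nA: "n \<in> A1" and eq: "\<phi> n = bb" by auto
            note kk = key[OF nA]
            have bi: "bb i - s0 = n i div q" using kk eq by auto
            have lt: "bb c < n c" "n c < bb c + T" using kk eq by auto
            have "n = \<psi> (n i mod q, n c - bb c - 1)"
            proof
              fix x
              show "n x = \<psi> (n i mod q, n c - bb c - 1) x"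
              proof (cases "x = i")
                case True thus ?thesis unfolding \<psi>_def bi using ci by simp
              next
                case False
                show ?thesis
                proof (cases "x = c")
                  case True thus ?thesis unfolding \<psi>_def using lt by simp
                next
                  case False2: False
                  have "bb x = n x" using eq[symmetric] False False2 unfolding \<phi>_def by simp
                  thus ?thesis unfolding \<psi>_def using False False2 by simp
                qed
              qed
            qed
            moreover have "(n i mod q, n c - bb c - 1) \<in> {..<q} \<times> {..<T}" using lt q0 by auto
            ultimately show "n \<in> \<psi> ` ({..<q} \<times> {..<T})" by blast
          qed
          hence "card {n \<in> A1. \<phi> n = bb} \<le> card ({..<q} \<times> {..<T})" by (intro fiber_card) auto
          thus ?thesis unfolding M1_def by simp
        qed
      qed
      thus ?thesis unfolding G1_def using M1pos by (simp add: algebra_simps)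
    qed
    have S2: "3 * G * (\<Sum>n\<in>A2. weight C rN n) \<le> (\<Sum>n\<in>Sh. weight C r n)"
    proof -
      define \<phi> where "\<phi> = (\<lambda>n::nat\<Rightarrow>nat. n(i := n i div q, c := nat \<lfloor>(W - hi * real (n i div q) - Z n) / d\<rfloor>))"
      have key: "\<phi> n \<in> Sh \<and> G2 * weight C rN n \<le> weight C r (\<phi> n) \<and> \<phi> n i = n i div q"
        if nA: "n \<in> A2" for n
      proof -
        have nS: "n \<in> Sh'" and y0: "n c < N0" and jJ: "J0 \<le> n i" using nA unfolding A2_def by auto
        note mn = memN[OF nS]
        define j where "j = n i"
        define y where "y = n c"
        define k where "k = j div q"
        define R where "R = W - hi * real k - Z n"
        define mc where "mc = nat \<lfloor>R / d\<rfloor>"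
        have \<phi>n: "\<phi> n = n(i := k, c := mc)" unfolding \<phi>_def k_def j_def mc_def R_def by simp
        have o1: "hi / real q * j + d * y + Z n \<le> W" and o2: "W < d + (hi / real q * j + d * y + Z n)"
          using mn unfolding j_def y_def by auto
        have kb1: "real k \<le> real j / real q" and kb2: "real j / real q < real k + 1"
          using div_bounds[OF q0(2), of j] unfolding k_def by auto
        have hk1: "hi * real k \<le> hi * real j / real q"
          using mult_left_mono[OF kb1, of hi] hi by (simp add: algebra_simps)
        have hk2: "hi * real j / real q < hi * real k + hi"
          using mult_strict_left_mono[OF kb2, of hi] hi by (simp add: algebra_simps)
        have hj: "hi / real q * j = hi * real j / real q" by simp
        have dy: "d * real y \<ge> 0" using d by simp
        have R0: "R \<ge> 0" unfolding R_def using o1 hk1 hj dy by linarith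
        have f1: "d * real mc \<le> R" and f2: "R < d * real mc + d"
          using floor_fill[OF d R0] unfolding mc_def by auto
        have inSh: "\<phi> n \<in> Sh"
        proof -
          have "\<forall>x. C \<le> x \<longrightarrow> (\<phi> n) x = 0" using mn iC cC unfolding \<phi>n by auto
          moreover have "hi * (\<phi> n) i + d * (\<phi> n) c + Z (\<phi> n) = hi * real k + d * real mc + Z n"
            unfolding \<phi>n using Zupd ci by simp
          ultimately show ?thesis unfolding Sh_def using shI[of "\<phi> n" W] f1 f2 unfolding R_def by auto
        qed
        have mcB: "mc \<le> B2"
        proof -
          have "R < d + d * real y + hi" unfolding R_def using o2 hk2 hj by linarith
          hence "d * real mc < d * (real y + 1 + hi / d)" using f1 d by (simp add: algebra_simps)
          hence "real mc < real y + 1 + hi / d" using d by (simp add: mult_less_cancel_left_pos)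
          moreover have "real y + 1 \<le> real N0" using y0 unfolding y_def by linarith
          moreover have "hi / d \<le> real (nat \<lceil>hi / d\<rceil>)" by (rule real_nat_ceiling_ge)
          ultimately have "real mc < real B2" unfolding B2_def by simp
          thus ?thesis by simp
        qed
        have wphi: "weight C r (\<phi> n) = a k * p mc * Rw n" unfolding wt \<phi>n using Rwupd ci by simp
        have wn: "weight C rN n = b j * p y * Rw n" unfolding wtN j_def y_def ..
        have pu: "p y \<le> P2max" unfolding p_def P2max_def using y0 unfolding y_def by (intro pois_upper[OF rc]) auto
        have pl: "P2min \<le> p mc" unfolding p_def P2min_def using mcB by (intro pois_lower[OF rc]) auto
        have ab: "(G2 * P2max / P2min) * b j \<le> a k" using J0[of j] jJ unfolding k_def j_def by simp
        have G2pos: "G2 \<ge> 0" unfolding G2_def using G by simp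
        have "G2 * (b j * p y) \<le> G2 * (b j * P2max)" using pu bpos G2pos by (intro mult_left_mono) (auto simp: less_imp_le)
        also have "\<dots> = ((G2 * P2max / P2min) * b j) * P2min" using P2min by (simp add: field_simps)
        also have "\<dots> \<le> a k * p mc" using ab pl P2min apos by (intro mult_mono) (auto simp: less_imp_le)
        finally have "G2 * (b j * p y) * Rw n \<le> a k * p mc * Rw n" using Rwpos[of n] by (simp add: mult_right_mono less_imp_le)
        hence "G2 * weight C rN n \<le> weight C r (\<phi> n)" unfolding wphi wn by (simp add: algebra_simps)
        moreover have "\<phi> n i = n i div q" unfolding \<phi>n k_def j_def using ci by simp
        ultimately show ?thesis using inSh by simp
      qed
      have "G2 * (\<Sum>n\<in>A2. weight C rN n) \<le> real M2 * (\<Sum>n\<in>Sh. weight C r n)"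
      proof (rule inj_bound[where \<phi>=\<phi>])
        show "finite A2" using finSh' unfolding A2_def by simp
        show "finite Sh" by (rule finSh)
        show "\<phi> ` A2 \<subseteq> Sh" using key by blast
        show "G2 * weight C rN n \<le> weight C r (\<phi> n)" if "n \<in> A2" for n using key[OF that] by blast
        show "weight C r bb \<ge> 0" for bb by (rule wnn)
        show "card {n \<in> A2. \<phi> n = bb} \<le> M2" if "bb \<in> Sh" for bb
        proof -
          define \<psi> where "\<psi> = (\<lambda>(x::nat, z::nat). bb(i := q * bb i + x, c := z))"
          have "{n \<in> A2. \<phi> n = bb} \<subseteq> \<psi> ` ({..<q} \<times> {..<N0})"
          proof
            fix n assume "n \<in> {n \<in> A2. \<phi> n = bb}"
            hence nA: "n \<in> A2" and eq: "\<phi> n = bb" by auto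
            note kk = key[OF nA]
            have bi: "bb i = n i div q" using kk eq by auto
            have lt: "n c < N0" using nA unfolding A2_def by auto
            have "n = \<psi> (n i mod q, n c)"
            proof
              fix x
              show "n x = \<psi> (n i mod q, n c) x"
              proof (cases "x = i")
                case True thus ?thesis unfolding \<psi>_def bi using ci by simp
              next
                case False
                show ?thesis
                proof (cases "x = c")
                  case True thus ?thesis unfolding \<psi>_def by simp
                next
                  case False2: False
                  have "bb x = n x" using eq[symmetric] False False2 unfolding \<phi>_def by simp
                  thus ?thesis unfolding \<psi>_def using False False2 by simp
                qed
              qed
            qed
            moreover have "(n i mod q, n c) \<in> {..<q} \<times> {..<N0}" using lt q0 by auto
            ultimately show "n \<in> \<psi> ` ({..<q} \<times> {..<N0})" by blast
          qed
          hence "card {n \<in> A2. \<phi> n = bb} \<le> card ({..<q} \<times> {..<N0})" by (intro fiber_card) auto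
          thus ?thesis unfolding M2_def by simp
        qed
      qed
      moreover have "M2 > 0" unfolding M2_def by simp
      hence "real M2 > 0" by simp
      ultimately show ?thesis unfolding G2_def by (simp add: algebra_simps)
    qed
    have S3: "3 * G * (\<Sum>n\<in>A3. weight C rN n) \<le> (\<Sum>n\<in>Sh. weight C r n)"
    proof -
      define cs where "cs = (\<lambda>n::nat\<Rightarrow>nat. SOME x. x \<in> X \<and> h x * real (n x) \<ge> Z n / real C)"
      define \<phi> where "\<phi> = (\<lambda>n::nat\<Rightarrow>nat. (n(cs n := n (cs n) - 1))(i := 0, c := nat \<lfloor>(W - (Z n - h (cs n))) / d\<rfloor>))"
      have key: "cs n \<in> X \<and> n (cs n) \<ge> 1 \<and> \<phi> n \<in> Sh \<and> G3 * weight C rN n \<le> weight C r (\<phi> n)"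
        if nA: "n \<in> A3" for n
      proof -
        have nS: "n \<in> Sh'" and y0: "n c < N0" and jJ: "n i < J0" using nA unfolding A3_def by auto
        note mn = memN[OF nS]
        define j where "j = n i"
        define y where "y = n c"
        define c' where "c' = cs n"
        have o1: "hi / real q * j + d * y + Z n \<le> W" and o2: "W < d + (hi / real q * j + d * y + Z n)"
          using mn unfolding j_def y_def by auto
        have jb: "hi / real q * j \<le> hi * real J0 / real q"
        proof -
          have "hi * real j \<le> hi * real J0" using jJ hi unfolding j_def by simp
          thus ?thesis using q0 by (simp add: divide_right_mono)
        qed
        have yb: "d + d * real y \<le> d * real N0"
        proof -
          have "real y + 1 \<le> real N0" using y0 unfolding y_def by linarith
          hence "d * (real y + 1) \<le> d * real N0" using d by simp
          thus ?thesis by (simp add: algebra_simps)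
        qed
        have ZRb: "Z n > W - Rb" using o2 jb yb unfolding Rb_def by linarith
        have W0b: "W - Rb \<ge> real C * Hs * (K3 + 1)" using W unfolding W0_def by simp
        have CH: "real C * Hs * (K3 + 1) > 0" using C0 Hs0 K3 by simp
        have Zpos: "Z n > 0" using ZRb W0b CH by linarith
        have "\<exists>x\<in>X. h x * real (n x) \<ge> Z n / real C"
          using pigeon[OF finX cardX _ _ Zpos] iC unfolding Z_def by auto
        hence cs: "c' \<in> X \<and> h c' * real (n c') \<ge> Z n / real C"
          unfolding c'_def cs_def by (rule someI_ex[where P="\<lambda>x. x \<in> X \<and> h x * real (n x) \<ge> Z n / real C", OF bexE]) auto
        hence c'X: "c' \<in> X" by simp
        have hc': "0 < h c'" "h c' \<le> Hs" using hX[OF c'X] by auto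
        have "Z n / real C > Hs * (K3 + 1)"
        proof -
          have "Z n > real C * (Hs * (K3 + 1))" using ZRb W0b by (simp add: mult.assoc)
          thus ?thesis using C0 by (simp add: field_simps)
        qed
        hence "h c' * real (n c') > Hs * (K3 + 1)" using cs by linarith
        moreover have "h c' * real (n c') \<le> Hs * real (n c')" using hc' by (intro mult_right_mono) auto
        ultimately have "Hs * real (n c') > Hs * (K3 + 1)" by linarith
        hence nc'K: "real (n c') > K3 + 1" using Hs0 by (simp add: mult_less_cancel_left_pos)
        hence nc1: "n c' \<ge> 1" using K3 by linarith
        have c'ne: "c' < C" "c' \<noteq> i" "c' \<noteq> c" using Xsub[OF c'X] by auto
        define R where "R = W - (Z n - h c')"
        define mc where "mc = nat \<lfloor>R / d\<rfloor>"
        have \<phi>n: "\<phi> n = (n(c' := n c' - 1))(i := 0, c := mc)" unfolding \<phi>_def c'_def mc_def R_def by simp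
        have Zle: "Z n \<le> W" using o1 hi q0 d by (smt (verit) of_nat_0_le_iff mult_nonneg_nonneg divide_nonneg_pos)
        have R0: "R \<ge> 0" unfolding R_def using Zle hc' by linarith
        have f1: "d * real mc \<le> R" and f2: "R < d * real mc + d"
          using floor_fill[OF d R0] unfolding mc_def by auto
        have Z\<phi>: "Z (\<phi> n) = Z n - h c'" unfolding \<phi>n Zupd using Zdec[where n=n, OF c'X nc1] .
        have inSh: "\<phi> n \<in> Sh"
        proof -
          have "\<forall>x. C \<le> x \<longrightarrow> (\<phi> n) x = 0" using mn iC cC c'ne unfolding \<phi>n by auto
          moreover have "hi * (\<phi> n) i + d * (\<phi> n) c + Z (\<phi> n) = d * real mc + (Z n - h c')"
            unfolding Z\<phi> unfolding \<phi>n using ci by simp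
          ultimately show ?thesis unfolding Sh_def using shI[of "\<phi> n" W] f1 f2 unfolding R_def by auto
        qed
        have mcB: "mc \<le> B3"
        proof -
          have "R < Rb + Hs" unfolding R_def using ZRb hc' by linarith
          hence "d * real mc < Rb + Hs" using f1 by linarith
          hence "real mc < (Rb + Hs) / d" using d by (simp add: field_simps)
          moreover have "(Rb + Hs) / d \<le> real B3" unfolding B3_def by (rule real_nat_ceiling_ge)
          ultimately show ?thesis by simp
        qed
        have Rwd: "r c' * Rw (n(c' := n c' - 1)) = real (n c') * Rw n" by (rule Rwdec[where n=n, OF c'X nc1])
        have wphi: "weight C r (\<phi> n) = p mc * Rw (n(c' := n c' - 1))"
          unfolding wt \<phi>n Rwupd using ci by (simp add: a_def)
        have wn: "weight C rN n = b j * p y * Rw n" unfolding wtN j_def y_def ..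
        have pu: "p y \<le> P2max" unfolding p_def P2max_def using y0 unfolding y_def by (intro pois_upper[OF rc]) auto
        have bu: "b j \<le> Bmax" unfolding b_def Bmax_def using jJ ri q0 unfolding j_def by (intro pois_upper) auto
        have pl: "P3min \<le> p mc" unfolding p_def P3min_def using mcB by (intro pois_lower[OF rc]) auto
        have rc': "0 < r c'" "r c' \<le> rs" using rX[OF c'X] by auto
        have "r c' * (G3 * weight C rN n) = r c' * G3 * (b j * p y) * Rw n" unfolding wn by (simp add: algebra_simps)
        also have "\<dots> \<le> rs * G3 * (Bmax * P2max) * Rw n"
          using rc' G3 bu pu bpos ppos Rwpos[of n] P2max Bmax
          by (intro mult_right_mono mult_mono) (auto simp: less_imp_le)
        also have "\<dots> = P3min * K3 * Rw n" unfolding K3_def using P3min by (simp add: field_simps)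
        also have "\<dots> \<le> p mc * real (n c') * Rw n"
          using pl nc'K P3min K3 Rwpos[of n] by (intro mult_right_mono mult_mono) (auto simp: less_imp_le)
        also have "\<dots> = r c' * weight C r (\<phi> n)" unfolding wphi using Rwd by (simp add: algebra_simps)
        finally have "G3 * weight C rN n \<le> weight C r (\<phi> n)" using rc' by simp
        thus ?thesis using inSh c'X nc1 unfolding c'_def by simp
      qed
      have "G3 * (\<Sum>n\<in>A3. weight C rN n) \<le> real M3 * (\<Sum>n\<in>Sh. weight C r n)"
      proof (rule inj_bound[where \<phi>=\<phi>])
        show "finite A3" using finSh' unfolding A3_def by simp
        show "finite Sh" by (rule finSh)
        show "\<phi> ` A3 \<subseteq> Sh" using key by blast
        show "G3 * weight C rN n \<le> weight C r (\<phi> n)" if "n \<in> A3" for n using key[OF that] by blast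
        show "weight C r bb \<ge> 0" for bb by (rule wnn)
        show "card {n \<in> A3. \<phi> n = bb} \<le> M3" if "bb \<in> Sh" for bb
        proof -
          define \<psi> where "\<psi> = (\<lambda>(c'::nat, x::nat, z::nat). bb(i := x, c := z, c' := bb c' + 1))"
          have "{n \<in> A3. \<phi> n = bb} \<subseteq> \<psi> ` ({..<C} \<times> {..<J0} \<times> {..<N0})"
          proof
            fix n assume "n \<in> {n \<in> A3. \<phi> n = bb}"
            hence nA: "n \<in> A3" and eq: "\<phi> n = bb" by auto
            note kk = key[OF nA]
            define c' where "c' = cs n"
            have c'X: "c' \<in> X" and nc1: "n c' \<ge> 1" using kk unfolding c'_def by auto
            have c'ne: "c' < C" "c' \<noteq> i" "c' \<noteq> c" using Xsub[OF c'X] by auto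
            have eq': "bb = (n(c' := n c' - 1))(i := 0, c := nat \<lfloor>(W - (Z n - h c')) / d\<rfloor>)"
              using eq unfolding \<phi>_def c'_def by simp
            have lt: "n c < N0" "n i < J0" using nA unfolding A3_def by auto
            have "n = \<psi> (c', n i, n c)"
            proof
              fix x
              show "n x = \<psi> (c', n i, n c) x"
              proof (cases "x = c'")
                case True thus ?thesis unfolding \<psi>_def eq' using c'ne nc1 by simp
              next
                case F1: False
                show ?thesis
                proof (cases "x = i")
                  case True thus ?thesis unfolding \<psi>_def using c'ne by simp
                next
                  case F2: False
                  show ?thesis
                  proof (cases "x = c")
                    case True thus ?thesis unfolding \<psi>_def using c'ne by simp
                  next
                    case F3: False
                    show ?thesis unfolding \<psi>_def eq' using F1 F2 F3 by simp
                  qed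
                qed
              qed
            qed
            moreover have "(c', n i, n c) \<in> {..<C} \<times> {..<J0} \<times> {..<N0}" using lt c'ne by auto
            ultimately show "n \<in> \<psi> ` ({..<C} \<times> {..<J0} \<times> {..<N0})" by blast
          qed
          hence "card {n \<in> A3. \<phi> n = bb} \<le> card ({..<C} \<times> {..<J0} \<times> {..<N0})" by (intro fiber_card) auto
          thus ?thesis unfolding M3_def by (simp add: card_cartesian_product)
        qed
      qed
      thus ?thesis unfolding G3_def using M3pos by (simp add: algebra_simps)
    qed
    have split: "(\<Sum>n\<in>Sh'. weight C rN n) = (\<Sum>n\<in>A1. weight C rN n) + (\<Sum>n\<in>A2. weight C rN n) + (\<Sum>n\<in>A3. weight C rN n)"
    proof -
      have e: "Sh' = A1 \<union> (A2 \<union> A3)" unfolding A1_def A2_def A3_def by auto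
      have f: "finite A1" "finite A2" "finite A3" using finSh' unfolding A1_def A2_def A3_def by auto
      have "(\<Sum>n\<in>A1 \<union> (A2 \<union> A3). weight C rN n) = (\<Sum>n\<in>A1. weight C rN n) + (\<Sum>n\<in>A2 \<union> A3. weight C rN n)"
        using f by (intro sum.union_disjoint) (auto simp: A1_def A2_def A3_def)
      also have "(\<Sum>n\<in>A2 \<union> A3. weight C rN n) = (\<Sum>n\<in>A2. weight C rN n) + (\<Sum>n\<in>A3. weight C rN n)"
        using f by (intro sum.union_disjoint) (auto simp: A1_def A2_def A3_def)
      finally show ?thesis unfolding e by simp
    qed
    show "G * (\<Sum>n\<in>{n\<in>state_space C hN W. hN c + occupied C hN n > W}. weight C rN n)
     \<le> (\<Sum>n\<in>{n\<in>state_space C h W. h c + occupied C h n > W}. weight C r n)"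
      using S1 S2 S3 unfolding Sh'_def[symmetric] Sh_def[symmetric] split by (simp add: algebra_simps)
  qed
  thus ?thesis unfolding hN_def rN_def by blast
qed


lemma mainB:
  fixes C :: nat and h r :: "nat \<Rightarrow> real" and q i :: nat and G :: real
  assumes hp: "\<forall>c<C. h c > 0" and rp: "\<forall>c<C. r c > 0" and q2: "q \<ge> 2" and iC: "i < C"
    and G: "G > 0"
  shows "\<exists>W0. \<forall>W\<ge>W0. G * (\<Sum>n\<in>{n\<in>state_space C (h(i := h i / real q)) W. (h(i := h i / real q)) i + occupied C (h(i := h i / real q)) n > W}. weight C (r(i := real q * r i)) n)
     \<le> (\<Sum>n\<in>{n\<in>state_space C h W. h i + occupied C h n > W}. weight C r n)"
proof -
  define hN where "hN = h(i := h i / real q)"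
  define rN where "rN = r(i := real q * r i)"
  define hi where "hi = h i"
  define ri where "ri = r i"
  define X where "X = {..<C} - {i}"
  define Z where "Z = (\<lambda>n::nat\<Rightarrow>nat. \<Sum>x\<in>X. h x * real (n x))"
  define Rw where "Rw = (\<lambda>n::nat\<Rightarrow>nat. \<Prod>x\<in>X. r x ^ n x / fact (n x))"
  define a where "a = (\<lambda>x::nat. ri ^ x / fact x)"
  define b where "b = (\<lambda>x::nat. (real q * ri) ^ x / fact x)"
  define Hs where "Hs = (\<Sum>x<C. h x)"
  define rs where "rs = (\<Sum>x<C. r x)"
  have hi: "hi > 0" using hp iC unfolding hi_def by simp
  have ri: "ri > 0" using rp iC unfolding ri_def by simp
  have q0: "real q > 0" "q > 0" using q2 by auto
  have C0: "real C > 0" using iC by simp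
  have finX: "finite X" unfolding X_def by simp
  have cardX: "card X \<le> C" unfolding X_def using card_mono[of "{..<C}" "{..<C} - {i}"] by simp
  have Xsub: "x < C \<and> x \<noteq> i" if "x \<in> X" for x using that unfolding X_def by auto
  have hX: "0 < h x \<and> h x \<le> Hs" if "x \<in> X" for x
  proof -
    have "h x \<le> Hs" unfolding Hs_def using Xsub[OF that] hp by (intro member_le_sum) (auto simp: less_imp_le)
    thus ?thesis using Xsub[OF that] hp by auto
  qed
  have rX: "0 < r x \<and> r x \<le> rs" if "x \<in> X" for x
  proof -
    have "r x \<le> rs" unfolding rs_def using Xsub[OF that] rp by (intro member_le_sum) (auto simp: less_imp_le)
    thus ?thesis using Xsub[OF that] rp by auto
  qed
  have "h i \<le> Hs" unfolding Hs_def using hp iC by (intro member_le_sum) (auto simp: less_imp_le)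
  hence Hs0: "Hs > 0" using hi unfolding hi_def by simp
  have "r i \<le> rs" unfolding rs_def using rp iC by (intro member_le_sum) (auto simp: less_imp_le)
  hence rs0: "rs > 0" using ri unfolding ri_def by simp
  have Zge: "Z n \<ge> 0" for n unfolding Z_def
  proof (intro sum_nonneg)
    fix x assume "x \<in> X" thus "0 \<le> h x * real (n x)" using hX[of x] by simp
  qed
  have Rwpos: "Rw n > 0" for n unfolding Rw_def using rX by (intro prod_pos) auto
  have apos: "a x > 0" for x unfolding a_def using ri by simp
  have bpos: "b x > 0" for x unfolding b_def using ri q0 by simp
  have occ: "occupied C h n = hi * n i + Z n" for n
    using occ_split1[OF iC, of h n] unfolding hi_def Z_def X_def .
  have occN: "occupied C hN n = hi / real q * n i + Z n" for n
  proof -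
    have "occupied C hN n = hN i * n i + (\<Sum>x\<in>{..<C}-{i}. hN x * n x)"
      by (rule occ_split1[OF iC])
    also have "(\<Sum>x\<in>{..<C}-{i}. hN x * n x) = Z n" unfolding Z_def X_def hN_def by (intro sum.cong) auto
    moreover have "hN i = hi / real q" unfolding hN_def hi_def by auto
    ultimately show ?thesis by simp
  qed
  have wt: "weight C r n = a (n i) * Rw n" for n
    using weight_split1[OF iC, of r n] unfolding a_def Rw_def X_def ri_def .
  have wtN: "weight C rN n = b (n i) * Rw n" for n
  proof -
    have "weight C rN n = (rN i ^ n i / fact (n i)) * (\<Prod>x\<in>{..<C}-{i}. rN x ^ n x / fact (n x))"
      by (rule weight_split1[OF iC])
    also have "(\<Prod>x\<in>{..<C}-{i}. rN x ^ n x / fact (n x)) = Rw n" unfolding Rw_def X_def rN_def by (intro prod.cong) auto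
    moreover have "rN i = real q * ri" unfolding rN_def ri_def by auto
    ultimately show ?thesis unfolding b_def by simp
  qed
  have Zupd: "Z (n(i := u)) = Z n" for n u unfolding Z_def X_def by (intro sum.cong) auto
  have Rwupd: "Rw (n(i := u)) = Rw n" for n u unfolding Rw_def X_def by (intro prod.cong) auto
  have Zdec: "Z (n(c' := n c' - 1)) = Z n - h c'" if "c' \<in> X" "n c' \<ge> 1" for n c'
  proof -
    have "Z (n(c' := n c' - 1)) = Z n - h c' * n c' + h c' * real (n c' - 1)"
      unfolding Z_def by (rule sum_upd[OF finX that(1)])
    also have "real (n c' - 1) = real (n c') - 1" using that(2) by (simp add: of_nat_diff)
    finally have e: "Z (n(c' := n c' - 1)) = Z n - h c' * n c' + h c' * (real (n c') - 1)" .
    have "h c' * (real (n c') - 1) = h c' * n c' - h c'" by (simp add: right_diff_distrib)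
    thus ?thesis using e by linarith
  qed
  have Rwdec: "r c' * Rw (n(c' := n c' - 1)) = real (n c') * Rw n" if "c' \<in> X" "n c' \<ge> 1" for n c'
    unfolding Rw_def by (rule prod_upd_dec[where n=n, OF finX that])
  have shI: "m \<in> {n\<in>state_space C h W. h i + occupied C h n > W}"
    if "\<forall>x. C \<le> x \<longrightarrow> m x = 0" "hi * m i + Z m \<le> W" "W < hi + (hi * m i + Z m)" for m W
    using that unfolding ss_iff occ hi_def by auto
  define MA where "MA = q + 1"
  define GA where "GA = 3 * G * real MA"
  obtain J0 where J0: "\<And>j. j \<ge> J0 \<Longrightarrow> GA * b j \<le> a (j div q)"
    using ratio_lemma[OF ri q2, of GA 0] unfolding a_def b_def by auto
  define Rb where "Rb = hi * real J0 / real q"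
  define Bd where "Bd = nat \<lceil>(Rb + Hs) / hi\<rceil>"
  define Amin where "Amin = min 1 ri ^ Bd / fact Bd"
  have Amin: "Amin > 0" unfolding Amin_def using ri by simp
  define Bmax where "Bmax = max 1 (real q * ri) ^ J0"
  have Bmax: "Bmax > 0" unfolding Bmax_def by simp
  define MB where "MB = C * J0 + 1"
  define GB where "GB = 3 * G * real MB"
  have "MB > 0" unfolding MB_def by simp
  hence MBpos: "real MB > 0" by simp
  have GB: "GB > 0" unfolding GB_def using G MBpos by simp
  have "MA > 0" unfolding MA_def by simp
  hence MApos: "real MA > 0" by simp
  define K where "K = GB * rs * Bmax / Amin"
  have K: "K \<ge> 0" unfolding K_def using GB rs0 Bmax Amin by simp
  define W0 where "W0 = Rb + real C * Hs * (K + 1)"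
  have "\<forall>W\<ge>W0. G * (\<Sum>n\<in>{n\<in>state_space C hN W. hN i + occupied C hN n > W}. weight C rN n)
     \<le> (\<Sum>n\<in>{n\<in>state_space C h W. h i + occupied C h n > W}. weight C r n)"
  proof (intro allI impI)
    fix W assume W: "W \<ge> W0"
    define Sh' where "Sh' = {n\<in>state_space C hN W. hN i + occupied C hN n > W}"
    define Sh where "Sh = {n\<in>state_space C h W. h i + occupied C h n > W}"
    have finSh: "finite Sh" unfolding Sh_def using finite_ss[OF hp, of W] by simp
    have hNp: "\<forall>c<C. hN c > 0" unfolding hN_def using hp q0 by auto
    have finSh': "finite Sh'" unfolding Sh'_def using finite_ss[OF hNp, of W] by simp
    have wnn: "weight C r n \<ge> 0" for n using wt apos Rwpos by (simp add: less_imp_le)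
    have memN: "(\<forall>x. C \<le> x \<longrightarrow> n x = 0) \<and> hi / real q * n i + Z n \<le> W \<and> W < hi / real q + (hi / real q * n i + Z n)"
      if "n \<in> Sh'" for n
      using that unfolding Sh'_def ss_iff occN by (auto simp: hN_def hi_def)
    define A1 where "A1 = {n\<in>Sh'. J0 \<le> n i}"
    define A2 where "A2 = {n\<in>Sh'. n i < J0}"
    have S1: "3 * G * (\<Sum>n\<in>A1. weight C rN n) \<le> (\<Sum>n\<in>Sh. weight C r n)"
    proof -
      define \<phi> where "\<phi> = (\<lambda>n::nat\<Rightarrow>nat. n(i := n i div q))"
      have key: "\<phi> n \<in> Sh \<and> GA * weight C rN n \<le> weight C r (\<phi> n) \<and> \<phi> n i = n i div q"
        if nA: "n \<in> A1" for n
      proof -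
        have nS: "n \<in> Sh'" and jJ: "J0 \<le> n i" using nA unfolding A1_def by auto
        note mn = memN[OF nS]
        define j where "j = n i"
        define k where "k = j div q"
        have \<phi>n: "\<phi> n = n(i := k)" unfolding \<phi>_def k_def j_def by simp
        have o1: "hi / real q * j + Z n \<le> W" and o2: "W < hi / real q + (hi / real q * j + Z n)"
          using mn unfolding j_def by auto
        have kb1: "real k \<le> real j / real q"
          using div_bounds[OF q0(2), of j] unfolding k_def by auto
        have "j + 1 \<le> q * (k + 1)"
        proof -
          have "j = q * k + j mod q" unfolding k_def by simp
          moreover have "j mod q < q" using q0 by simp
          ultimately show ?thesis by simp
        qed
        hence "real j + 1 \<le> real q * (real k + 1)" by (metis of_nat_1 of_nat_add of_nat_le_iff of_nat_mult)
        hence kb2: "(real j + 1) / real q \<le> real k + 1" using q0 by (simp add: field_simps)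
        have hk1: "hi * real k \<le> hi * real j / real q"
          using mult_left_mono[OF kb1, of hi] hi by (simp add: algebra_simps)
        have hk2: "hi * ((real j + 1) / real q) \<le> hi * (real k + 1)"
          using mult_left_mono[OF kb2, of hi] hi by simp
        have e1: "hi * ((real j + 1) / real q) = hi / real q + hi / real q * j" by (simp add: add_divide_distrib algebra_simps)
        have e2: "hi * (real k + 1) = hi * real k + hi" by (simp add: algebra_simps)
        have hj: "hi / real q * j = hi * real j / real q" by simp
        have inSh: "\<phi> n \<in> Sh"
        proof -
          have "\<forall>x. C \<le> x \<longrightarrow> (\<phi> n) x = 0" using mn iC unfolding \<phi>n by auto
          moreover have "hi * (\<phi> n) i + Z (\<phi> n) = hi * real k + Z n"
            unfolding \<phi>n using Zupd by simp
          ultimately show ?thesis unfolding Sh_def using shI[of "\<phi> n" W] o1 o2 hk1 hk2 e1 e2 hj by auto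
        qed
        have wphi: "weight C r (\<phi> n) = a k * Rw n" unfolding wt \<phi>n using Rwupd by simp
        have wn: "weight C rN n = b j * Rw n" unfolding wtN j_def ..
        have ab: "GA * b j \<le> a k" using J0[of j] jJ unfolding k_def j_def by simp
        have "GA * weight C rN n \<le> weight C r (\<phi> n)" unfolding wphi wn
          using mult_right_mono[OF ab, of "Rw n"] Rwpos[of n] by (simp add: algebra_simps)
        moreover have "\<phi> n i = n i div q" unfolding \<phi>n k_def j_def by simp
        ultimately show ?thesis using inSh by simp
      qed
      have "GA * (\<Sum>n\<in>A1. weight C rN n) \<le> real MA * (\<Sum>n\<in>Sh. weight C r n)"
      proof (rule inj_bound[where \<phi>=\<phi>])
        show "finite A1" using finSh' unfolding A1_def by simp
        show "finite Sh" by (rule finSh)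
        show "\<phi> ` A1 \<subseteq> Sh" using key by blast
        show "GA * weight C rN n \<le> weight C r (\<phi> n)" if "n \<in> A1" for n using key[OF that] by blast
        show "weight C r bb \<ge> 0" for bb by (rule wnn)
        show "card {n \<in> A1. \<phi> n = bb} \<le> MA" if "bb \<in> Sh" for bb
        proof -
          define \<psi> where "\<psi> = (\<lambda>x::nat. bb(i := q * bb i + x))"
          have "{n \<in> A1. \<phi> n = bb} \<subseteq> \<psi> ` {..<q}"
          proof
            fix n assume "n \<in> {n \<in> A1. \<phi> n = bb}"
            hence nA: "n \<in> A1" and eq: "\<phi> n = bb" by auto
            note kk = key[OF nA]
            have bi: "bb i = n i div q" using kk eq by auto
            have "n = \<psi> (n i mod q)"
            proof
              fix x
              show "n x = \<psi> (n i mod q) x"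
              proof (cases "x = i")
                case True thus ?thesis unfolding \<psi>_def bi by simp
              next
                case False
                have "bb x = n x" using eq[symmetric] False unfolding \<phi>_def by simp
                thus ?thesis unfolding \<psi>_def using False by simp
              qed
            qed
            moreover have "n i mod q \<in> {..<q}" using q0 by auto
            ultimately show "n \<in> \<psi> ` {..<q}" by blast
          qed
          hence "card {n \<in> A1. \<phi> n = bb} \<le> card {..<q}" by (intro fiber_card) auto
          thus ?thesis unfolding MA_def by simp
        qed
      qed
      thus ?thesis unfolding GA_def using MApos by (simp add: algebra_simps)
    qed
    have S2: "3 * G * (\<Sum>n\<in>A2. weight C rN n) \<le> (\<Sum>n\<in>Sh. weight C r n)"
    proof -
      define cs where "cs = (\<lambda>n::nat\<Rightarrow>nat. SOME x. x \<in> X \<and> h x * real (n x) \<ge> Z n / real C)"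
      define \<phi> where "\<phi> = (\<lambda>n::nat\<Rightarrow>nat. (n(cs n := n (cs n) - 1))(i := nat \<lfloor>(W - (Z n - h (cs n))) / hi\<rfloor>))"
      have key: "cs n \<in> X \<and> n (cs n) \<ge> 1 \<and> \<phi> n \<in> Sh \<and> GB * weight C rN n \<le> weight C r (\<phi> n)"
        if nA: "n \<in> A2" for n
      proof -
        have nS: "n \<in> Sh'" and jJ: "n i < J0" using nA unfolding A2_def by auto
        note mn = memN[OF nS]
        define j where "j = n i"
        define c' where "c' = cs n"
        have o1: "hi / real q * j + Z n \<le> W" and o2: "W < hi / real q + (hi / real q * j + Z n)"
          using mn unfolding j_def by auto
        have jb: "hi / real q + hi / real q * j \<le> Rb"
        proof -
          have "real j + 1 \<le> real J0" using jJ unfolding j_def by linarith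
          hence "hi * (real j + 1) \<le> hi * real J0" using hi by simp
          hence "hi * (real j + 1) / real q \<le> hi * real J0 / real q" using q0 by (simp add: divide_right_mono)
          thus ?thesis unfolding Rb_def by (simp add: add_divide_distrib algebra_simps)
        qed
        have ZRb: "Z n > W - Rb" using o2 jb by linarith
        have W0b: "W - Rb \<ge> real C * Hs * (K + 1)" using W unfolding W0_def by simp
        have CH: "real C * Hs * (K + 1) > 0" using C0 Hs0 K by simp
        have Zpos: "Z n > 0" using ZRb W0b CH by linarith
        have "\<exists>x\<in>X. h x * real (n x) \<ge> Z n / real C"
          using pigeon[OF finX cardX _ _ Zpos] iC unfolding Z_def by auto
        hence cs: "c' \<in> X \<and> h c' * real (n c') \<ge> Z n / real C"
          unfolding c'_def cs_def by (rule someI_ex[where P="\<lambda>x. x \<in> X \<and> h x * real (n x) \<ge> Z n / real C", OF bexE]) auto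
        hence c'X: "c' \<in> X" by simp
        have hc': "0 < h c'" "h c' \<le> Hs" using hX[OF c'X] by auto
        have "Z n / real C > Hs * (K + 1)"
        proof -
          have "Z n > real C * (Hs * (K + 1))" using ZRb W0b by (simp add: mult.assoc)
          thus ?thesis using C0 by (simp add: field_simps)
        qed
        hence "h c' * real (n c') > Hs * (K + 1)" using cs by linarith
        moreover have "h c' * real (n c') \<le> Hs * real (n c')" using hc' by (intro mult_right_mono) auto
        ultimately have "Hs * real (n c') > Hs * (K + 1)" by linarith
        hence nc'K: "real (n c') > K + 1" using Hs0 by (simp add: mult_less_cancel_left_pos)
        hence nc1: "n c' \<ge> 1" using K by linarith
        have c'ne: "c' < C" "c' \<noteq> i" using Xsub[OF c'X] by auto
        define R where "R = W - (Z n - h c')"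
        define mc where "mc = nat \<lfloor>R / hi\<rfloor>"
        have \<phi>n: "\<phi> n = (n(c' := n c' - 1))(i := mc)" unfolding \<phi>_def c'_def mc_def R_def by simp
        have Zle: "Z n \<le> W" using o1 hi q0 by (smt (verit) of_nat_0_le_iff mult_nonneg_nonneg divide_nonneg_pos)
        have R0: "R \<ge> 0" unfolding R_def using Zle hc' by linarith
        have f1: "hi * real mc \<le> R" and f2: "R < hi * real mc + hi"
          using floor_fill[OF hi R0] unfolding mc_def by auto
        have Z\<phi>: "Z (\<phi> n) = Z n - h c'" unfolding \<phi>n Zupd using Zdec[where n=n, OF c'X nc1] .
        have inSh: "\<phi> n \<in> Sh"
        proof -
          have "\<forall>x. C \<le> x \<longrightarrow> (\<phi> n) x = 0" using mn iC c'ne unfolding \<phi>n by auto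
          moreover have "hi * (\<phi> n) i + Z (\<phi> n) = hi * real mc + (Z n - h c')"
            unfolding Z\<phi> unfolding \<phi>n by simp
          ultimately show ?thesis unfolding Sh_def using shI[of "\<phi> n" W] f1 f2 unfolding R_def by auto
        qed
        have mcB: "mc \<le> Bd"
        proof -
          have "R < Rb + Hs" unfolding R_def using ZRb hc' by linarith
          hence "hi * real mc < Rb + Hs" using f1 by linarith
          hence "real mc < (Rb + Hs) / hi" using hi by (simp add: field_simps)
          moreover have "(Rb + Hs) / hi \<le> real Bd" unfolding Bd_def by (rule real_nat_ceiling_ge)
          ultimately show ?thesis by simp
        qed
        have Rwd: "r c' * Rw (n(c' := n c' - 1)) = real (n c') * Rw n" by (rule Rwdec[where n=n, OF c'X nc1])
        have wphi: "weight C r (\<phi> n) = a mc * Rw (n(c' := n c' - 1))"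
          unfolding wt \<phi>n Rwupd by simp
        have wn: "weight C rN n = b j * Rw n" unfolding wtN j_def ..
        have bu: "b j \<le> Bmax" unfolding b_def Bmax_def using jJ ri q0 unfolding j_def by (intro pois_upper) auto
        have al: "Amin \<le> a mc" unfolding a_def Amin_def using mcB by (intro pois_lower[OF ri]) auto
        have rc': "0 < r c'" "r c' \<le> rs" using rX[OF c'X] by auto
        have "r c' * (GB * weight C rN n) = r c' * GB * b j * Rw n" unfolding wn by (simp add: algebra_simps)
        also have "\<dots> \<le> rs * GB * Bmax * Rw n"
          using rc' GB bu bpos Rwpos[of n] Bmax
          by (intro mult_right_mono mult_mono) (auto simp: less_imp_le)
        also have "\<dots> = Amin * K * Rw n" unfolding K_def using Amin by (simp add: field_simps)
        also have "\<dots> \<le> a mc * real (n c') * Rw n"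
          using al nc'K Amin K Rwpos[of n] by (intro mult_right_mono mult_mono) (auto simp: less_imp_le)
        also have "\<dots> = r c' * weight C r (\<phi> n)" unfolding wphi using Rwd by (simp add: algebra_simps)
        finally have "GB * weight C rN n \<le> weight C r (\<phi> n)" using rc' by simp
        thus ?thesis using inSh c'X nc1 unfolding c'_def by simp
      qed
      have "GB * (\<Sum>n\<in>A2. weight C rN n) \<le> real MB * (\<Sum>n\<in>Sh. weight C r n)"
      proof (rule inj_bound[where \<phi>=\<phi>])
        show "finite A2" using finSh' unfolding A2_def by simp
        show "finite Sh" by (rule finSh)
        show "\<phi> ` A2 \<subseteq> Sh" using key by blast
        show "GB * weight C rN n \<le> weight C r (\<phi> n)" if "n \<in> A2" for n using key[OF that] by blast
        show "weight C r bb \<ge> 0" for bb by (rule wnn)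
        show "card {n \<in> A2. \<phi> n = bb} \<le> MB" if "bb \<in> Sh" for bb
        proof -
          define \<psi> where "\<psi> = (\<lambda>(c'::nat, x::nat). bb(i := x, c' := bb c' + 1))"
          have "{n \<in> A2. \<phi> n = bb} \<subseteq> \<psi> ` ({..<C} \<times> {..<J0})"
          proof
            fix n assume "n \<in> {n \<in> A2. \<phi> n = bb}"
            hence nA: "n \<in> A2" and eq: "\<phi> n = bb" by auto
            note kk = key[OF nA]
            define c' where "c' = cs n"
            have c'X: "c' \<in> X" and nc1: "n c' \<ge> 1" using kk unfolding c'_def by auto
            have c'ne: "c' < C" "c' \<noteq> i" using Xsub[OF c'X] by auto
            have eq': "bb = (n(c' := n c' - 1))(i := nat \<lfloor>(W - (Z n - h c')) / hi\<rfloor>)"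
              using eq unfolding \<phi>_def c'_def by simp
            have lt: "n i < J0" using nA unfolding A2_def by auto
            have "n = \<psi> (c', n i)"
            proof
              fix x
              show "n x = \<psi> (c', n i) x"
              proof (cases "x = c'")
                case True thus ?thesis unfolding \<psi>_def eq' using c'ne nc1 by simp
              next
                case F1: False
                show ?thesis
                proof (cases "x = i")
                  case True thus ?thesis unfolding \<psi>_def using c'ne by simp
                next
                  case F2: False
                  show ?thesis unfolding \<psi>_def eq' using F1 F2 by simp
                qed
              qed
            qed
            moreover have "(c', n i) \<in> {..<C} \<times> {..<J0}" using lt c'ne by auto
            ultimately show "n \<in> \<psi> ` ({..<C} \<times> {..<J0})" by blast
          qed
          hence "card {n \<in> A2. \<phi> n = bb} \<le> card ({..<C} \<times> {..<J0})" by (intro fiber_card) auto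
          thus ?thesis unfolding MB_def by (simp add: card_cartesian_product)
        qed
      qed
      thus ?thesis unfolding GB_def using MBpos by (simp add: algebra_simps)
    qed
    have split: "(\<Sum>n\<in>Sh'. weight C rN n) = (\<Sum>n\<in>A1. weight C rN n) + (\<Sum>n\<in>A2. weight C rN n)"
    proof -
      have e: "Sh' = A1 \<union> A2" unfolding A1_def A2_def by auto
      have f: "finite A1" "finite A2" using finSh' unfolding A1_def A2_def by auto
      show ?thesis unfolding e using f by (intro sum.union_disjoint) (auto simp: A1_def A2_def)
    qed
    show "G * (\<Sum>n\<in>{n\<in>state_space C hN W. hN i + occupied C hN n > W}. weight C rN n)
     \<le> (\<Sum>n\<in>{n\<in>state_space C h W. h i + occupied C h n > W}. weight C r n)"
      using S1 S2 sum_nonneg[of Sh "weight C r", OF wnn] unfolding Sh'_def[symmetric] Sh_def[symmetric] split by (simp add: algebra_simps)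
  qed
  thus ?thesis unfolding hN_def rN_def by blast
qed


lemma weight_nonneg: "\<forall>c<C. r c \<ge> 0 \<Longrightarrow> weight C r n \<ge> 0"
  unfolding weight_def by (intro prod_nonneg) auto

lemma weight_zero: "weight C r (\<lambda>_. 0) = 1"
  unfolding weight_def by simp

lemma F_pos:
  assumes "\<forall>c<C. h c > 0" "\<forall>c<C. r c > 0" "W \<ge> 0"
  shows "(\<Sum>n\<in>state_space C h W. weight C r n) > 0"
proof -
  have z: "(\<lambda>_. 0::nat) \<in> state_space C h W" using assms unfolding ss_iff occupied_def by simp
  have "1 = weight C r (\<lambda>_. 0)" by (simp add: weight_zero)
  also have "\<dots> \<le> (\<Sum>n\<in>state_space C h W. weight C r n)"
    using z finite_ss[OF assms(1)] weight_nonneg[of C r] assms(2) by (intro member_le_sum) (auto simp: less_imp_le)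
  finally show ?thesis by simp
qed

theorem theorem1:
  fixes C :: nat and h s lam :: "nat \<Rightarrow> real" and q i :: nat
  assumes "\<forall>c<C. lam c > 0" and "\<forall>c<C. h c > 0" and "\<forall>c<C. s c > 0"
    and "q > 0" and "i < C"
    and "lam i * s i < 1"
  shows "\<forall>c<C. \<exists>W0::real. \<forall>W>W0. W > 0 \<longrightarrow>
           blocking_prob C c h s lam W \<ge>
           blocking_prob C c (h(i := h i / real q)) (s(i := real q * s i)) lam W"
proof (intro allI impI)
  fix c assume cC: "c < C"
  show "\<exists>W0::real. \<forall>W>W0. W > 0 \<longrightarrow>
           blocking_prob C c h s lam W \<ge>
           blocking_prob C c (h(i := h i / real q)) (s(i := real q * s i)) lam W"
  proof (cases "q = 1")
    case True
    have "h(i := h i / real q) = h" "s(i := real q * s i) = s" using True by auto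
    thus ?thesis by auto
  next
    case False
    hence q2: "q \<ge> 2" using assms(4) by simp
    define r where "r = (\<lambda>k. lam k * s k)"
    have rp: "\<forall>c<C. r c > 0" unfolding r_def using assms(1,3) by simp
    have hp: "\<forall>c<C. h c > 0" using assms(2) .
    have iC: "i < C" using assms(5) .
    have q0: "q > 0" using q2 by simp
    define G where "G = exp (r i)"
    have G: "G > 0" unfolding G_def by simp
    have rN: "(\<lambda>k. lam k * (s(i := real q * s i)) k) = r(i := real q * r i)"
      unfolding r_def by (auto simp: fun_eq_iff)
    obtain W0 where W0: "\<And>W. W \<ge> W0 \<Longrightarrow> G * (\<Sum>n\<in>{n\<in>state_space C (h(i := h i / real q)) W. (h(i := h i / real q)) c + occupied C (h(i := h i / real q)) n > W}. weight C (r(i := real q * r i)) n)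
     \<le> (\<Sum>n\<in>{n\<in>state_space C h W. h c + occupied C h n > W}. weight C r n)"
    proof (cases "c = i")
      case True
      show ?thesis using that mainB[OF hp rp q2 iC G] unfolding True by blast
    next
      case False
      show ?thesis using that mainA[OF hp rp q2 iC cC False G] by blast
    qed
    show ?thesis
    proof (intro exI allI impI)
      fix W assume "W > W0" and Wp: "W > 0"
      hence W: "W \<ge> W0" by simp
      define hN where "hN = h(i := h i / real q)"
      define rN where "rN = r(i := real q * r i)"
      define S where "S = (\<Sum>n\<in>{n\<in>state_space C h W. h c + occupied C h n > W}. weight C r n)"
      define F where "F = (\<Sum>n\<in>state_space C h W. weight C r n)"
      define S' where "S' = (\<Sum>n\<in>{n\<in>state_space C hN W. hN c + occupied C hN n > W}. weight C rN n)"
      define F' where "F' = (\<Sum>n\<in>state_space C hN W. weight C rN n)"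
      have hNp: "\<forall>c<C. hN c > 0" unfolding hN_def using hp q0 by auto
      have rNp: "\<forall>c<C. rN c > 0" unfolding rN_def using rp q0 by auto
      have Fp: "F > 0" unfolding F_def using F_pos[OF hp rp] Wp by simp
      have F'p: "F' > 0" unfolding F'_def using F_pos[OF hNp rNp] Wp by simp
      have S'nn: "S' \<ge> 0" unfolding S'_def using weight_nonneg[of C rN] rNp by (intro sum_nonneg) (auto simp: less_imp_le)
      have GS: "G * S' \<le> S" unfolding S_def S'_def hN_def rN_def using W0[OF W] .
      have FF: "F \<le> G * F'" unfolding F_def F'_def G_def hN_def rN_def by (rule F_bound[OF hp rp iC q0])
      have "S' * F \<le> S' * (G * F')" using FF S'nn by (intro mult_left_mono)
      also have "\<dots> = (G * S') * F'" by (simp add: algebra_simps)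
      also have "\<dots> \<le> S * F'" using GS F'p by (intro mult_right_mono) auto
      finally have "S' / F' \<le> S / F" using Fp F'p by (simp add: divide_simps mult.commute)
      moreover have "blocking_prob C c h s lam W = S / F" unfolding blocking_prob_def Let_def S_def F_def r_def ..
      moreover have "blocking_prob C c (h(i := h i / real q)) (s(i := real q * s i)) lam W = S' / F'"
        unfolding blocking_prob_def Let_def rN S'_def F'_def hN_def rN_def ..
      ultimately show "blocking_prob C c (h(i := h i / real q)) (s(i := real q * s i)) lam W \<le> blocking_prob C c h s lam W"
        by simp
    qed
  qed
qed

end
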